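(* Let $\sigma>0$. There exists $R_0=R_0(\sigma,m,n)\ge1$ such that for every $R\ge R_0$ and every $i\in\mathbb{N}$ the following holds. Let $B\subseteq\mathcal{L}^{mn}$ be a ball of radius $\rho(B)<R^{-(m+n)(1+i)}$ such that $\|A\|_\infty\le\sigma$ for all $A\in B$, and suppose there is no pair $(\mathbf{q},A)$ with $\mathbf{q}\in\mathbb{F}[X]^{m+n}$, $A\in B$ satisfying both $$0<\max_{1\le l'\le n}|q_{l'}|<\delta^*R^{m(1+i)}\quad\text{and}\quad \max_{1\le l\le m}|\mathbf{q}\cdot\mathrm{col}_l(\tilde A^* )|<\delta^*R^{-n(1+i)-m}.$$ Then the set of $\mathbf{q}\in\mathbb{F}[X]^{m+n}$ for which there exists $A\in B$ with $$0<\max_{1\le l\le m}|q_l|<\delta R^{n(\tau+i+1)}\quad\text{and}\quad \max_{1\le l'\le n}|\mathbf{q}\cdot \mathrm{col}_{l'}(\tilde A)|<\delta R^{-m(\tau+i+1)-n}$$ contains at most $n$ vectors that are linearly independent over $\mathcal{L}$.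
   Context: $\mathbb{F}$ is the finite field with $k$ elements, $\mathcal{L}=\mathbb{F}((X^{-1}))$ with absolute value $|x|=k^{n}$ where $X^n$ is the leading term of $x$, $\|\mathbf{x}\|_\infty=\max_i|x_i|$; $m\times n$ matrices over $\mathcal{L}$ are identified with $\mathcal{L}^{mn}$ (norm = max of absolute values of entries). For $\mathbf{x},\mathbf{y}\in\mathcal{L}^{m+n}$, $\mathbf{x}\cdot\mathbf{y}=\sum x_iy_i$; $\mathbf{q}=(q_1,\dots,q_{m+n})$. For $A\in\mathcal{L}^{mn}$ define the $(m+n)\times(m+n)$ matrices $\tilde A=\begin{pmatrix}A&I_m\\ I_n&0\end{pmatrix}$ and $\tilde A^*=\begin{pmatrix}A^T&I_n\\ I_m&0\end{pmatrix}$, and $\mathrm{col}_j(M)$ denotes the $j$-th column of $M$. For $R\ge1$ put $\delta=R^{-m(m+n)^2}$, $\delta^*=R^{-n(m+n)^2}$, $\tau=m/(m+n)$. *)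

theory Defs
  imports Complex_Main "HOL-Computational_Algebra.Formal_Laurent_Series"
          "HOL-Computational_Algebra.Polynomial"
begin

text \<open>The field L = F((X^-1)) is modelled by the library type of formal Laurent series
  'a fls in a variable T with finitely many negative powers, where T plays the role of X^-1.
  Thus X corresponds to fls_X_inv, and the leading term X^N of a nonzero x corresponds to
  the lowest T-power T^(-N), i.e. N = - fls_subdegree x.\<close>

definition labs :: "'a::{field,finite} fls \<Rightarrow> real" where
  "labs x = (if x = 0 then 0 else real (card (UNIV :: 'a set)) powi (- fls_subdegree x))"

definition poly_to_L :: "'a::field poly \<Rightarrow> 'a fls" where
  "poly_to_L p = (\<Sum>j\<le>degree p. fls_const (coeff p j) * fls_X_inv ^ j)"

text \<open>Matrices are functions row => column => entry, indices starting at 0.\<close>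
definition matnorm :: "nat \<Rightarrow> nat \<Rightarrow> (nat \<Rightarrow> nat \<Rightarrow> 'a::{field,finite} fls) \<Rightarrow> real" where
  "matnorm m n A = Max {labs (A i j) | i j. i < m \<and> j < n}"

definition matball :: "nat \<Rightarrow> nat \<Rightarrow> (nat \<Rightarrow> nat \<Rightarrow> 'a::{field,finite} fls) \<Rightarrow> real
    \<Rightarrow> (nat \<Rightarrow> nat \<Rightarrow> 'a fls) set" where
  "matball m n A0 r = {A. (\<forall>i j. \<not> (i < m \<and> j < n) \<longrightarrow> A i j = 0) \<and>
                          matnorm m n (\<lambda>i j. A i j - A0 i j) \<le> r}"

text \<open>tilde A = [[A, I_m],[I_n, 0]] for an m x n matrix A; a (m+n) x (m+n) matrix.\<close>
definition tildeA :: "nat \<Rightarrow> nat \<Rightarrow> (nat \<Rightarrow> nat \<Rightarrow> 'a::field fls) \<Rightarrow> nat \<Rightarrow> nat \<Rightarrow> 'a fls" where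
  "tildeA m n A r c =
     (if r < m then (if c < n then A r c else if c - n = r then 1 else 0)
      else (if c < n then (if r - m = c then 1 else 0) else 0))"

text \<open>tilde A^* = [[A^T, I_n],[I_m, 0]]; a (m+n) x (m+n) matrix.\<close>
definition tildeA_star :: "nat \<Rightarrow> nat \<Rightarrow> (nat \<Rightarrow> nat \<Rightarrow> 'a::field fls) \<Rightarrow> nat \<Rightarrow> nat \<Rightarrow> 'a fls" where
  "tildeA_star m n A r c =
     (if r < n then (if c < m then A c r else if c - m = r then 1 else 0)
      else (if c < m then (if r - n = c then 1 else 0) else 0))"

definition col :: "(nat \<Rightarrow> nat \<Rightarrow> 'b) \<Rightarrow> nat \<Rightarrow> nat \<Rightarrow> 'b" where
  "col M j = (\<lambda>r. M r j)"

definition dotp :: "nat \<Rightarrow> (nat \<Rightarrow> 'b::comm_semiring_1) \<Rightarrow> (nat \<Rightarrow> 'b) \<Rightarrow> 'b" where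
  "dotp d x y = (\<Sum>r<d. x r * y r)"

definition lin_indep :: "nat \<Rightarrow> nat \<Rightarrow> (nat \<Rightarrow> nat \<Rightarrow> 'b::field) \<Rightarrow> bool" where
  "lin_indep d t w \<longleftrightarrow>
     (\<forall>c. (\<forall>j<d. (\<Sum>s<t. c s * w s j) = 0) \<longrightarrow> (\<forall>s<t. c s = 0))"

end

theory Submission
  imports Defs "Jordan_Normal_Form.Determinant" "HOL-Library.Function_Algebras"
begin

hide_const (open) Matrix.col

definition dle :: "'a::field fls \<Rightarrow> int \<Rightarrow> bool" where
  "dle x D \<longleftrightarrow> (\<forall>j < -D. fls_nth x j = 0)"

definition polyish :: "'a::field fls \<Rightarrow> bool" where
  "polyish x \<longleftrightarrow> (\<forall>j > 0. fls_nth x j = 0)"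

lemma dle_0[simp]: "dle 0 D" by (simp add: dle_def)
lemma dle_add: "dle x D \<Longrightarrow> dle y D \<Longrightarrow> dle (x + y) D" by (simp add: dle_def)
lemma dle_diff: "dle x D \<Longrightarrow> dle y D \<Longrightarrow> dle (x - y) D" by (simp add: dle_def)
lemma dle_uminus: "dle x D \<Longrightarrow> dle (- x) D" by (simp add: dle_def)
lemma dle_mono: "dle x D \<Longrightarrow> D \<le> D' \<Longrightarrow> dle x D'" by (simp add: dle_def)
lemma dle_sum: "(\<And>j. j \<in> S \<Longrightarrow> dle (f j) D) \<Longrightarrow> dle (\<Sum>j\<in>S. f j) D"
  by (induction S rule: infinite_finite_induct) (auto intro: dle_add)
lemma dle_const: "dle (fls_const c) 0" by (simp add: dle_def)

lemma dle_iff_subdeg: "dle x D \<longleftrightarrow> x = 0 \<or> - D \<le> fls_subdegree x"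
proof
  assume "dle x D" thus "x = 0 \<or> - D \<le> fls_subdegree x"
    by (metis dle_def fls_subdegree_geI)
next
  assume "x = 0 \<or> - D \<le> fls_subdegree x" thus "dle x D"
    by (auto simp: dle_def)
qed

lemma dle_subdeg: "dle x (- fls_subdegree x)"
  by (simp add: dle_iff_subdeg)

lemma dle_mult_lead:
  fixes x y :: "'a::field fls"
  assumes "dle x a" "dle y b"
  shows "dle (x * y) (a + b)" and "fls_nth (x * y) (-(a+b)) = fls_nth x (-a) * fls_nth y (-b)"
proof -
  show "dle (x * y) (a + b)"
  proof (cases "x = 0 \<or> y = 0")
    case True thus ?thesis by auto
  next
    case False thus ?thesis using assms by (auto simp: dle_iff_subdeg fls_subdegree_mult)
  qed
  show "fls_nth (x * y) (-(a+b)) = fls_nth x (-a) * fls_nth y (-b)"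
  proof (cases "x = 0 \<or> y = 0")
    case True thus ?thesis by auto
  next
    case False
    hence sx: "-a \<le> fls_subdegree x" and sy: "-b \<le> fls_subdegree y"
      using assms by (auto simp: dle_iff_subdeg)
    show ?thesis
    proof (cases "fls_subdegree x = -a \<and> fls_subdegree y = -b")
      case True
      then show ?thesis using fls_times_nth(4)[of x y "-(a+b)"] by simp
    next
      case F2: False
      have "fls_nth x (-a) = 0 \<or> fls_nth y (-b) = 0" using F2 sx sy by auto
      moreover have "fls_nth (x * y) (-(a+b)) = 0"
        using F2 sx sy by (intro fls_times_nth_eq0) auto
      ultimately show ?thesis by auto
    qed
  qed
qed

lemma dle_mult: "dle x a \<Longrightarrow> dle y b \<Longrightarrow> dle (x * y) (a + b)"
  using dle_mult_lead(1) by blast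

lemma dle_prod: "(\<And>i. i \<in> S \<Longrightarrow> dle (f i) (g i)) \<Longrightarrow> dle (\<Prod>i\<in>S. f i) (\<Sum>i\<in>S. g i)"
proof (induction S rule: infinite_finite_induct)
  case (infinite A) thus ?case by (simp add: dle_def)
next
  case empty thus ?case by (simp add: dle_def)
next
  case (insert x F) thus ?case by (simp add: dle_mult)
qed

lemma dle_X_inv_pow: "dle (fls_const c * fls_X_inv ^ k) (int k)"
  by (simp add: dle_def)

lemma polyish_add: "polyish x \<Longrightarrow> polyish y \<Longrightarrow> polyish (x + y)" by (simp add: polyish_def)
lemma polyish_diff: "polyish x \<Longrightarrow> polyish y \<Longrightarrow> polyish (x - y)" by (simp add: polyish_def)
lemma polyish_uminus: "polyish x \<Longrightarrow> polyish (- x)" by (simp add: polyish_def)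
lemma polyish_0[simp]: "polyish 0" by (simp add: polyish_def)
lemma polyish_1[simp]: "polyish 1" by (simp add: polyish_def)
lemma polyish_const: "polyish (fls_const c)" by (simp add: polyish_def)
lemma polyish_X_inv_pow: "polyish (fls_const c * fls_X_inv ^ k)" by (simp add: polyish_def)
lemma polyish_mult:
  fixes x y :: "'a::field fls"
  assumes "polyish x" "polyish y" shows "polyish (x * y)"
  unfolding polyish_def
proof (intro allI impI)
  fix j :: int assume j: "j > 0"
  have "fls_nth (x * y) j = (\<Sum>i=fls_subdegree x..j - fls_subdegree y. fls_nth x i * fls_nth y (j - i))"
    by (rule fls_times_nth(2))
  also have "\<dots> = 0"
  proof (rule sum.neutral, intro ballI)
    fix i assume "i \<in> {fls_subdegree x..j - fls_subdegree y}"
    show "fls_nth x i * fls_nth y (j - i) = 0"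
    proof (cases "i > 0")
      case True thus ?thesis using assms(1) by (simp add: polyish_def)
    next
      case False thus ?thesis using assms(2) j by (simp add: polyish_def)
    qed
  qed
  finally show "fls_nth (x * y) j = 0" .
qed
lemma polyish_sum: "(\<And>j. j \<in> S \<Longrightarrow> polyish (f j)) \<Longrightarrow> polyish (\<Sum>j\<in>S. f j)"
  by (induction S rule: infinite_finite_induct) (auto intro: polyish_add)
lemma polyish_prod: "(\<And>j. j \<in> S \<Longrightarrow> polyish (f j)) \<Longrightarrow> polyish (\<Prod>j\<in>S. f j)"
  by (induction S rule: infinite_finite_induct) (auto intro: polyish_mult)
lemma polyish_of_int: "polyish (of_int z :: 'a::field fls)"
  by (simp add: fls_of_int polyish_const)

lemma polyish_dle_neg: "polyish x \<Longrightarrow> dle x D \<Longrightarrow> D < 0 \<Longrightarrow> x = 0"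
  unfolding polyish_def dle_def
  by (metis fls_zero_eqI linorder_not_le order_le_less_trans neg_0_less_iff_less)

lemma polyish_nz_subdeg: "polyish x \<Longrightarrow> x \<noteq> 0 \<Longrightarrow> fls_subdegree x \<le> 0"
  by (metis nth_fls_subdegree_nonzero polyish_def not_le)

lemma poly_to_L_nth: "fls_nth (poly_to_L p) j = (if j \<le> 0 then coeff p (nat (-j)) else 0)"
proof -
  have "fls_nth (poly_to_L p) j = (\<Sum>t\<le>degree p. coeff p t * (if j = - int t then 1 else 0))"
    unfolding poly_to_L_def fls_nth_sum by (simp add: fls_X_inv_power_nth)
  also have "\<dots> = (\<Sum>t\<in>{..degree p} \<inter> {t. j = - int t}. coeff p t)"
    by (simp add: sum.inter_restrict if_distrib cong: if_cong)
  also have "\<dots> = (if j \<le> 0 then coeff p (nat (-j)) else 0)"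
  proof (cases "j \<le> 0")
    case True
    show ?thesis
    proof (cases "nat (-j) \<le> degree p")
      case True2: True
      have "{..degree p} \<inter> {t. j = - int t} = {nat (-j)}" using True True2 by auto
      thus ?thesis using True by simp
    next
      case False
      have "{..degree p} \<inter> {t. j = - int t} = {}" using True False by auto
      thus ?thesis using True False by (simp add: coeff_eq_0)
    qed
  next
    case False
    have "{..degree p} \<inter> {t. j = - int t} = {}" using False by auto
    thus ?thesis using False by simp
  qed
  finally show ?thesis .
qed

lemma polyish_poly_to_L: "polyish (poly_to_L p)"
  by (simp add: polyish_def poly_to_L_nth)

lemma poly_to_L_eq0_iff: "poly_to_L p = 0 \<longleftrightarrow> p = 0"
proof
  assume "poly_to_L p = 0"
  hence "coeff p k = 0" for k using poly_to_L_nth[of p "- int k"] by simp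
  thus "p = 0" by (simp add: poly_eqI)
qed (simp add: poly_to_L_def)

lemma polyish_to_poly:
  fixes x :: "'a::field fls"
  assumes "polyish x" shows "\<exists>p. poly_to_L p = x"
proof -
  have fin: "\<forall>\<^sub>\<infinity>k. fls_nth x (- int k) = 0" by simp
  define p where "p = Abs_poly (\<lambda>k. fls_nth x (- int k))"
  have "coeff p = (\<lambda>k. fls_nth x (- int k))"
    unfolding p_def by (rule Abs_poly_inverse) (use fin in simp)
  hence cp: "coeff p k = fls_nth x (- int k)" for k by simp
  have "poly_to_L p = x"
  proof (rule fls_eqI)
    fix j show "fls_nth (poly_to_L p) j = fls_nth x j"
      using assms by (auto simp: poly_to_L_nth cp polyish_def)
  qed
  thus ?thesis by blast
qed

definition kk :: "'a::{field,finite} itself \<Rightarrow> real" where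
  "kk _ = real (card (UNIV :: 'a set))"

lemma card_field_ge2: "card (UNIV :: 'a::{field,finite} set) \<ge> 2"
proof -
  have "{0::'a, 1} \<subseteq> UNIV" by simp
  hence "card {0::'a, 1} \<le> card (UNIV :: 'a set)" by (intro card_mono) auto
  thus ?thesis by simp
qed

lemma kk_gt1: "kk TYPE('a::{field,finite}) > 1"
  using card_field_ge2[where 'a='a] by (simp add: kk_def)

lemma powi_less_iff: "(a::real) > 1 \<Longrightarrow> a powi x < a powi y \<longleftrightarrow> x < y"
  by (metis linorder_not_le power_int_increasing power_int_strict_increasing less_imp_le order_le_less_trans)
lemma powi_le_iff: "(a::real) > 1 \<Longrightarrow> a powi x \<le> a powi y \<longleftrightarrow> x \<le> y"
  by (meson linorder_not_le powi_less_iff)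

lemma labs_alt: "labs (x :: 'a::{field,finite} fls) = (if x = 0 then 0 else kk TYPE('a) powi (- fls_subdegree x))"
  by (simp add: labs_def kk_def)

lemma labs_nonneg: "labs x \<ge> 0"
  by (simp add: labs_def)

lemma labs_pos: "x \<noteq> 0 \<Longrightarrow> labs x > 0"
  by (simp add: labs_def card_gt_0_iff)

lemma labs_0[simp]: "labs 0 = 0" by (simp add: labs_def)

lemma labs_mult: "labs ((x::'a::{field,finite} fls) * y) = labs x * labs y"
proof (cases "x = 0 \<or> y = 0")
  case True thus ?thesis by auto
next
  case False
  have k: "kk TYPE('a) \<noteq> 0" using kk_gt1[where 'a='a] by simp
  show ?thesis using False
    by (simp add: labs_alt fls_subdegree_mult power_int_add[OF disjI1[OF k], symmetric] algebra_simps)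
qed

lemma labs_uminus[simp]: "labs (- x) = labs x" by (simp add: labs_def)

lemma labs_add: "labs ((x::'a::{field,finite} fls) + y) \<le> max (labs x) (labs y)"
proof (cases "x = 0 \<or> y = 0 \<or> x + y = 0")
  case True thus ?thesis using labs_nonneg[of x] by (auto simp: max_def)
next
  case False
  have "fls_subdegree (x + y) \<ge> min (fls_subdegree x) (fls_subdegree y)"
    using False by (intro fls_plus_subdegree) auto
  hence "- fls_subdegree (x + y) \<le> - fls_subdegree x \<or> - fls_subdegree (x + y) \<le> - fls_subdegree y"
    by linarith
  thus ?thesis using False kk_gt1[where 'a='a]
    by (auto simp: labs_alt powi_le_iff max_def)
qed

lemma labs_diff_comm: "labs ((x::'a::{field,finite} fls) - y) = labs (y - x)"
  by (metis labs_uminus minus_diff_eq)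

lemma labs_lt_dle: "labs (x::'a::{field,finite} fls) < kk TYPE('a) powi (D + 1) \<Longrightarrow> dle x D"
proof (cases "x = 0")
  case False
  assume "labs x < kk TYPE('a) powi (D + 1)"
  hence "- fls_subdegree x < D + 1" using False kk_gt1[where 'a='a] by (simp add: labs_alt powi_less_iff)
  thus ?thesis by (simp add: dle_iff_subdeg)
qed simp

lemma dle_labs: "dle (x::'a::{field,finite} fls) D \<Longrightarrow> labs x \<le> kk TYPE('a) powi D"
proof (cases "x = 0")
  case False
  assume "dle x D"
  hence "- fls_subdegree x \<le> D" using False by (simp add: dle_iff_subdeg)
  thus ?thesis using False kk_gt1[where 'a='a] by (simp add: labs_alt powi_le_iff)
qed (use kk_gt1[where 'a='a] in simp)

lemma labs_sum_lt:
  fixes f :: "'b \<Rightarrow> 'a::{field,finite} fls"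
  assumes "C > 0" "\<And>j. j \<in> S \<Longrightarrow> labs (f j) < C"
  shows "labs (\<Sum>j\<in>S. f j) < C"
  using assms(2)
proof (induction S rule: infinite_finite_induct)
  case (insert x F)
  have "labs (f x + sum f F) \<le> max (labs (f x)) (labs (sum f F))" by (rule labs_add)
  also have "\<dots> < C" using insert by auto
  finally show ?case using insert by simp
qed (use assms(1) in auto)

lemma labs_sum_le:
  fixes f :: "'b \<Rightarrow> 'a::{field,finite} fls"
  assumes "C \<ge> 0" "\<And>j. j \<in> S \<Longrightarrow> labs (f j) \<le> C"
  shows "labs (\<Sum>j\<in>S. f j) \<le> C"
  using assms(2)
proof (induction S rule: infinite_finite_induct)
  case (insert x F)
  have "labs (f x + sum f F) \<le> max (labs (f x)) (labs (sum f F))" by (rule labs_add)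
  also have "\<dots> \<le> C" using insert by auto
  finally show ?case using insert by simp
qed (use assms(1) in auto)

definition ndle :: "nat \<Rightarrow> (nat \<Rightarrow> int) \<Rightarrow> (nat \<Rightarrow> 'a::field fls) \<Rightarrow> int \<Rightarrow> bool" where
  "ndle d ew v D \<longleftrightarrow> (\<forall>i<d. dle (v i) (D + ew i))"

definition lvec :: "(nat \<Rightarrow> int) \<Rightarrow> (nat \<Rightarrow> 'a::field fls) \<Rightarrow> int \<Rightarrow> nat \<Rightarrow> 'a" where
  "lvec ew v D i = fls_nth (v i) (-(D + ew i))"

definition nz :: "nat \<Rightarrow> (nat \<Rightarrow> 'a::field fls) \<Rightarrow> bool" where
  "nz d v \<longleftrightarrow> (\<exists>i<d. v i \<noteq> 0)"

definition ndeg :: "nat \<Rightarrow> (nat \<Rightarrow> int) \<Rightarrow> (nat \<Rightarrow> 'a::field fls) \<Rightarrow> int" where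
  "ndeg d ew v = Max ((\<lambda>i. - fls_subdegree (v i) - ew i) ` {i. i < d \<and> v i \<noteq> 0})"

lemma ndeg_ge: "i < d \<Longrightarrow> v i \<noteq> 0 \<Longrightarrow> - fls_subdegree (v i) - ew i \<le> ndeg d ew v"
  unfolding ndeg_def by (rule Max_ge) auto

lemma ndeg_attained: "nz d v \<Longrightarrow> \<exists>i<d. v i \<noteq> 0 \<and> ndeg d ew v = - fls_subdegree (v i) - ew i"
proof -
  assume "nz d v"
  hence ne: "{i. i < d \<and> v i \<noteq> 0} \<noteq> {}" by (auto simp: nz_def)
  have "ndeg d ew v \<in> (\<lambda>i. - fls_subdegree (v i) - ew i) ` {i. i < d \<and> v i \<noteq> 0}"
    unfolding ndeg_def by (rule Max_in) (use ne in auto)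
  thus ?thesis by auto
qed

lemma ndeg_ndle: "ndle d ew v (ndeg d ew v)"
  unfolding ndle_def
proof (intro allI impI)
  fix i assume "i < d"
  show "dle (v i) (ndeg d ew v + ew i)"
  proof (cases "v i = 0")
    case False
    thus ?thesis using ndeg_ge[of i d v ew] \<open>i<d\<close> by (auto simp: dle_iff_subdeg)
  qed simp
qed

lemma ndeg_lvec: "nz d v \<Longrightarrow> \<exists>i<d. lvec ew v (ndeg d ew v) i \<noteq> 0"
proof -
  assume "nz d v"
  then obtain i where "i < d" "v i \<noteq> 0" "ndeg d ew v = - fls_subdegree (v i) - ew i"
    using ndeg_attained by blast
  thus ?thesis by (intro exI[of _ i]) (auto simp: lvec_def)
qed

lemma ndle_ndeg: "nz d v \<Longrightarrow> ndle d ew v D \<Longrightarrow> ndeg d ew v \<le> D"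
proof -
  assume "nz d v" "ndle d ew v D"
  then obtain i where i: "i < d" "v i \<noteq> 0" "ndeg d ew v = - fls_subdegree (v i) - ew i"
    using ndeg_attained by blast
  with \<open>ndle d ew v D\<close> have "dle (v i) (D + ew i)" by (auto simp: ndle_def)
  thus ?thesis using i by (auto simp: dle_iff_subdeg)
qed

lemma ndle_lower: "ndle d ew v D \<Longrightarrow> (\<forall>i<d. lvec ew v D i = 0) \<Longrightarrow> ndle d ew v (D - 1)"
  unfolding ndle_def dle_def lvec_def
proof (intro allI impI)
  fix i j assume a: "\<forall>i<d. \<forall>j < - (D + ew i). fls_nth (v i) j = 0" "\<forall>i<d. fls_nth (v i) (- (D + ew i)) = 0"
    "i < d" "j < - (D - 1 + ew i)"
  hence "j < - (D + ew i) \<or> j = - (D + ew i)" by linarith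
  thus "fls_nth (v i) j = 0" using a by auto
qed

definition reduced :: "nat \<Rightarrow> (nat \<Rightarrow> int) \<Rightarrow> (nat \<Rightarrow> nat \<Rightarrow> 'a::field fls) \<Rightarrow> bool" where
  "reduced d ew b \<longleftrightarrow> (\<forall>j<d. nz d (b j)) \<and>
     (\<forall>\<alpha>::nat \<Rightarrow> 'a. (\<forall>i<d. (\<Sum>j<d. \<alpha> j * lvec ew (b j) (ndeg d ew (b j)) i) = 0) \<longrightarrow> (\<forall>j<d. \<alpha> j = 0))"

lemma orth:
  fixes b :: "nat \<Rightarrow> nat \<Rightarrow> 'a::field fls"
  assumes red: "reduced d ew b"
    and sm: "ndle d ew (\<lambda>i. \<Sum>j<d. c j * b j i) D"
    and j0: "j0 < d"
  shows "dle (c j0) (D - ndeg d ew (b j0))"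
proof (rule ccontr)
  assume nd: "\<not> dle (c j0) (D - ndeg d ew (b j0))"
  let ?mu = "\<lambda>j. ndeg d ew (b j)"
  let ?g = "\<lambda>j. - fls_subdegree (c j)"
  let ?JS = "{j. j < d \<and> c j \<noteq> 0}"
  have c0: "c j0 \<noteq> 0" using nd by auto
  have ne: "?JS \<noteq> {}" using c0 j0 by auto
  define G where "G = Max ((\<lambda>j. ?g j + ?mu j) ` ?JS)"
  have Gge: "?g j + ?mu j \<le> G" if "j < d" "c j \<noteq> 0" for j
    unfolding G_def by (rule Max_ge) (use that in auto)
  obtain jm where jm: "jm < d" "c jm \<noteq> 0" "G = ?g jm + ?mu jm"
  proof -
    have "G \<in> (\<lambda>j. ?g j + ?mu j) ` ?JS" unfolding G_def by (rule Max_in) (use ne in auto)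
    thus ?thesis using that by auto
  qed
  have "?g j0 > D - ?mu j0" using nd c0 by (auto simp: dle_iff_subdeg)
  hence GD: "G > D" using Gge[OF j0 c0] by linarith
  define \<alpha> where "\<alpha> j = (if c j \<noteq> 0 \<and> ?g j + ?mu j = G then fls_nth (c j) (- ?g j) else 0)" for j
  have bnd: "ndle d ew (b j) (?mu j)" for j by (rule ndeg_ndle)
  have coef: "fls_nth (c j * b j i) (-(G + ew i)) = \<alpha> j * lvec ew (b j) (?mu j) i"
    if "j < d" "i < d" for i j
  proof (cases "c j = 0")
    case True thus ?thesis by (simp add: \<alpha>_def)
  next
    case False
    have dc: "dle (c j) (?g j)" by (rule dle_subdeg)
    have db: "dle (b j i) (?mu j + ew i)" using bnd[of j] that by (simp add: ndle_def)
    show ?thesis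
    proof (cases "?g j + ?mu j = G")
      case True
      have e: "-(G + ew i) = -(?g j + (?mu j + ew i))" using True by simp
      have "fls_nth (c j * b j i) (-(G + ew i)) = fls_nth (c j) (- ?g j) * fls_nth (b j i) (-(?mu j + ew i))"
        unfolding e by (rule dle_mult_lead(2)[OF dc db])
      thus ?thesis using True False by (simp add: \<alpha>_def lvec_def)
    next
      case F2: False
      have "?g j + ?mu j < G" using Gge[OF that(1) False] F2 by simp
      moreover have "dle (c j * b j i) (?g j + (?mu j + ew i))" by (rule dle_mult[OF dc db])
      ultimately have "fls_nth (c j * b j i) (-(G + ew i)) = 0" by (simp add: dle_def)
      thus ?thesis using F2 by (simp add: \<alpha>_def)
    qed
  qed
  have "(\<Sum>j<d. \<alpha> j * lvec ew (b j) (?mu j) i) = 0" if i: "i < d" for i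
  proof -
    have "(\<Sum>j<d. \<alpha> j * lvec ew (b j) (?mu j) i) = fls_nth (\<Sum>j<d. c j * b j i) (-(G + ew i))"
      unfolding fls_nth_sum by (rule sum.cong) (use coef i in auto)
    also have "\<dots> = 0" using sm i GD by (simp add: ndle_def dle_def)
    finally show ?thesis .
  qed
  hence "\<forall>j<d. \<alpha> j = 0" using red by (simp add: reduced_def)
  hence "\<alpha> jm = 0" using jm by simp
  moreover have "\<alpha> jm = fls_nth (c jm) (fls_subdegree (c jm))" using jm by (simp add: \<alpha>_def)
  ultimately show False using jm(2) by simp
qed

definition app :: "nat \<Rightarrow> (nat \<Rightarrow> nat \<Rightarrow> 'a::field fls) \<Rightarrow> (nat \<Rightarrow> 'a fls) \<Rightarrow> nat \<Rightarrow> 'a fls" where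
  "app d M v i = (\<Sum>k<d. M i k * v k)"

lemma app_lin: "app d M (\<lambda>r. \<Sum>l<d. a l * q l r) i = (\<Sum>l<d. a l * app d M (q l) i)"
proof -
  have "app d M (\<lambda>r. \<Sum>l<d. a l * q l r) i = (\<Sum>k<d. \<Sum>l<d. M i k * (a l * q l k))"
    by (simp add: app_def sum_distrib_left)
  also have "\<dots> = (\<Sum>l<d. \<Sum>k<d. a l * (M i k * q l k))"
    by (subst sum.swap) (simp add: algebra_simps)
  also have "\<dots> = (\<Sum>l<d. a l * app d M (q l) i)"
    by (simp add: app_def sum_distrib_left)
  finally show ?thesis .
qed

definition latinv :: "nat \<Rightarrow> (nat \<Rightarrow> nat \<Rightarrow> 'a::field fls) \<Rightarrow> bool" where
  "latinv d q \<longleftrightarrow> (\<forall>j<d. \<forall>r<d. polyish (q j r)) \<and>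
     (\<forall>i<d. \<exists>c. (\<forall>j<d. polyish (c j)) \<and> (\<forall>r<d. (\<Sum>j<d. c j * q j r) = (if r = i then 1 else 0))) \<and>
     (\<forall>c. (\<forall>r<d. (\<Sum>j<d. c j * q j r) = 0) \<longrightarrow> (\<forall>j<d. c j = 0))"

lemma latinv_init: "latinv d (\<lambda>j r. if r = j then 1 else 0)"
proof -
  have s: "(\<Sum>j<d. c j * (if r = j then 1 else 0)) = (if r < d then c r else 0)" for c :: "nat \<Rightarrow> 'a fls" and r
  proof -
    have "(\<Sum>j<d. c j * (if r = j then 1 else 0)) = (\<Sum>j<d. if j = r then c j else 0)"
      by (rule sum.cong) auto
    also have "\<dots> = (if r < d then c r else 0)" by (simp add: sum.delta)
    finally show ?thesis .
  qed
  have P: "\<forall>j<d. \<forall>r<d. polyish (if r = j then 1 else (0::'a fls))" by (simp add: polyish_def)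
  have S: "\<forall>i<d. \<exists>c. (\<forall>j<d. polyish (c j)) \<and> (\<forall>r<d. (\<Sum>j<d. c j * (if r = j then 1 else 0)) = (if r = i then (1::'a fls) else 0))"
  proof (intro allI impI)
    fix i assume "i < d"
    have h1: "\<forall>r<d. (\<Sum>j<d. (if j = i then 1 else 0) * (if r = j then 1 else 0)) = (if r = i then (1::'a fls) else 0)"
    proof (intro allI impI)
      fix r assume r: "r < d"
      show "(\<Sum>j<d. (if j = i then 1 else 0) * (if r = j then 1 else 0)) = (if r = i then (1::'a fls) else 0)"
        using s[of "\<lambda>j. if j = i then 1 else 0" r] r by simp
    qed
    have h2: "\<forall>j<d. polyish (if j = i then 1 else (0::'a fls))" by (simp add: polyish_def)
    show "\<exists>c. (\<forall>j<d. polyish (c j)) \<and> (\<forall>r<d. (\<Sum>j<d. c j * (if r = j then 1 else 0)) = (if r = i then (1::'a fls) else 0))"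
      by (rule exI[where x="\<lambda>j. if j = i then 1 else 0"], rule conjI) (use h1 h2 in \<open>simp_all only:\<close>)
  qed
  have I: "\<forall>c. (\<forall>r<d. (\<Sum>j<d. c j * (if r = j then 1 else 0)) = (0::'a fls)) \<longrightarrow> (\<forall>j<d. c j = 0)"
    using s by simp
  show ?thesis unfolding latinv_def using P S I by blast
qed

lemma colop_sum:
  fixes q :: "nat \<Rightarrow> nat \<Rightarrow> 'a::field fls" and a c :: "nat \<Rightarrow> 'a fls"
  assumes js: "js < d"
  defines "q' \<equiv> q(js := (\<lambda>r. \<Sum>l<d. a l * q l r))"
  shows "(\<Sum>j<d. c j * q' j r) = (\<Sum>l<d. (c l + c js * a l - (if l = js then c js else 0)) * q l r)"
proof -
  have q'js: "q' js r = (\<Sum>l<d. a l * q l r)" by (simp add: q'_def)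
  have "(\<Sum>j<d. c j * q' j r) = c js * q' js r + (\<Sum>j\<in>{..<d} - {js}. c j * q' j r)"
    by (rule sum.remove) (use js in auto)
  also have "(\<Sum>j\<in>{..<d} - {js}. c j * q' j r) = (\<Sum>j\<in>{..<d} - {js}. c j * q j r)"
    by (rule sum.cong) (auto simp: q'_def)
  also have "\<dots> = (\<Sum>j<d. c j * q j r) - c js * q js r"
  proof -
    have "(\<Sum>j<d. c j * q j r) = c js * q js r + (\<Sum>j\<in>{..<d} - {js}. c j * q j r)"
      by (rule sum.remove) (use js in auto)
    thus ?thesis by simp
  qed
  finally have "(\<Sum>j<d. c j * q' j r) = c js * (\<Sum>l<d. a l * q l r) + (\<Sum>j<d. c j * q j r) - c js * q js r"
    by (simp only: q'js add_diff_eq)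
  also have "\<dots> = (\<Sum>l<d. (c l + c js * a l - (if l = js then c js else 0)) * q l r)"
  proof -
    have "(\<Sum>l<d. (if l = js then c js else 0) * q l r) = (\<Sum>l<d. if l = js then c js * q js r else 0)"
      by (rule sum.cong) auto
    also have "\<dots> = c js * q js r" using js by simp
    finally have h0: "(\<Sum>l<d. (if l = js then c js else 0) * q l r) = c js * q js r" .
    have h1: "(\<Sum>l<d. (c js * a l) * q l r) = c js * (\<Sum>l<d. a l * q l r)"
      by (simp only: sum_distrib_left mult.assoc)
    have "(\<Sum>l<d. (c l + c js * a l - (if l = js then c js else 0)) * q l r)
        = (\<Sum>l<d. c l * q l r + (c js * a l) * q l r - (if l = js then c js else 0) * q l r)"
      by (rule sum.cong) (simp_all only: ring_distribs)
    also have "\<dots> = (\<Sum>l<d. c l * q l r) + (\<Sum>l<d. (c js * a l) * q l r) - (\<Sum>l<d. (if l = js then c js else 0) * q l r)"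
      by (simp only: sum.distrib sum_subtractf)
    finally show ?thesis unfolding h0 h1 by simp
  qed
  finally show ?thesis .
qed

lemma colop_latinv:
  fixes q :: "nat \<Rightarrow> nat \<Rightarrow> 'a::field fls"
  assumes inv: "latinv d q" and js: "js < d" and ajs: "a js = fls_const \<alpha>" "\<alpha> \<noteq> 0"
    and ap: "\<forall>l<d. polyish (a l)"
  shows "latinv d (q(js := (\<lambda>r. \<Sum>l<d. a l * q l r)))"
proof -
  let ?q' = "q(js := (\<lambda>r. \<Sum>l<d. a l * q l r))"
  let ?T = "\<lambda>c l. c l + c js * a l - (if l = js then c js else 0)"
  have P: "\<forall>j<d. \<forall>r<d. polyish (?q' j r)"
    using inv ap by (auto simp: latinv_def intro!: polyish_sum polyish_mult)
  have S: "\<forall>i<d. \<exists>c. (\<forall>j<d. polyish (c j)) \<and> (\<forall>r<d. (\<Sum>j<d. c j * ?q' j r) = (if r = i then 1 else 0))"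
  proof (intro allI impI)
    fix i assume i: "i < d"
    obtain c where cp: "\<forall>j<d. polyish (c j)" and cs: "\<forall>r<d. (\<Sum>j<d. c j * q j r) = (if r = i then 1 else 0)"
      using inv i unfolding latinv_def by blast
    define c' where "c' l = (if l = js then c js * fls_const (inverse \<alpha>) else c l - c js * fls_const (inverse \<alpha>) * a l)" for l
    have T: "?T c' l = c l" for l
    proof (cases "l = js")
      case True
      have "c js * fls_const (inverse \<alpha>) * fls_const \<alpha> = c js"
        using ajs by (simp add: mult.assoc fls_const_mult_const[symmetric])
      thus ?thesis using True ajs by (simp add: c'_def)
    qed (simp add: c'_def)
    have h2: "\<forall>j<d. polyish (c' j)"
      using cp ap js by (auto simp: c'_def intro!: polyish_mult polyish_diff polyish_const)
    have h1: "\<forall>r<d. (\<Sum>j<d. c' j * ?q' j r) = (if r = i then 1 else 0)"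
    proof (intro allI impI)
      fix r assume r: "r < d"
      have eq: "(\<Sum>j<d. c' j * ?q' j r) = (\<Sum>l<d. ?T c' l * q l r)" by (rule colop_sum[OF js])
      show "(\<Sum>j<d. c' j * ?q' j r) = (if r = i then 1 else 0)" unfolding eq T using cs r by simp
    qed
    show "\<exists>c. (\<forall>j<d. polyish (c j)) \<and> (\<forall>r<d. (\<Sum>j<d. c j * ?q' j r) = (if r = i then 1 else 0))"
      by (rule exI[where x=c'], rule conjI[OF h2 h1])
  qed
  have I: "\<forall>c. (\<forall>r<d. (\<Sum>j<d. c j * ?q' j r) = 0) \<longrightarrow> (\<forall>j<d. c j = 0)"
  proof (intro allI impI)
    fix c :: "nat \<Rightarrow> 'a fls" and j assume h: "\<forall>r<d. (\<Sum>j<d. c j * ?q' j r) = 0" and j: "j < d"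
    have "\<forall>r<d. (\<Sum>l<d. ?T c l * q l r) = 0"
    proof (intro allI impI)
      fix r assume r: "r < d"
      have eq: "(\<Sum>j<d. c j * ?q' j r) = (\<Sum>l<d. ?T c l * q l r)" by (rule colop_sum[OF js])
      show "(\<Sum>l<d. ?T c l * q l r) = 0" using h r unfolding eq[symmetric] by blast
    qed
    moreover have "\<forall>c. (\<forall>r<d. (\<Sum>j<d. c j * q j r) = 0) \<longrightarrow> (\<forall>j<d. c j = 0)"
      using inv unfolding latinv_def by (elim conjE)
    ultimately have T0: "\<forall>l<d. ?T c l = 0" by (rule mp[OF spec[where x="?T c"], rotated])
    have "c js * fls_const \<alpha> = 0" using T0[rule_format, OF js] ajs by simp
    hence cjs: "c js = 0" using ajs by simp
    show "c j = 0" using T0[rule_format, OF j] cjs by simp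
  qed
  show ?thesis unfolding latinv_def by (rule conjI[OF P conjI[OF S I]])
qed

lemma latinv_nz_q:
  assumes "latinv d q" "j < d" shows "nz d (q j)"
proof (rule ccontr)
  assume "\<not> nz d (q j)"
  hence z: "\<forall>r<d. q j r = 0" by (auto simp: nz_def)
  have "\<forall>r<d. (\<Sum>l<d. (if l = j then 1 else 0) * q l r) = 0"
  proof (intro allI impI)
    fix r assume r: "r < d"
    have "(\<Sum>l<d. (if l = j then 1 else 0) * q l r) = (\<Sum>l<d. if l = j then q j r else 0)"
      by (rule sum.cong) auto
    also have "\<dots> = 0" using z r assms(2) by simp
    finally show "(\<Sum>l<d. (if l = j then 1 else 0) * q l r) = 0" .
  qed
  moreover have "\<forall>c. (\<forall>r<d. (\<Sum>j<d. c j * q j r) = 0) \<longrightarrow> (\<forall>j<d. c j = 0)"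
    using assms(1) unfolding latinv_def by (elim conjE)
  ultimately have "\<forall>l<d. (if l = j then 1 else (0::'a fls)) = 0"
    by (rule mp[OF spec[where x="\<lambda>l. if l = j then 1 else 0"], rotated])
  thus False using assms(2) by auto
qed

lemma latinv_nz_b:
  assumes "latinv d q" "j < d" and inj: "\<forall>v. (\<forall>i<d. app d M v i = 0) \<longrightarrow> (\<forall>r<d. v r = 0)"
  shows "nz d (app d M (q j))"
proof (rule ccontr)
  assume "\<not> nz d (app d M (q j))"
  hence "\<forall>i<d. app d M (q j) i = 0" by (auto simp: nz_def)
  hence "\<forall>r<d. q j r = 0" using inj by blast
  thus False using latinv_nz_q[OF assms(1,2)] by (auto simp: nz_def)
qed

lemma latinv_lb:
  assumes "latinv d q" "j < d"
    and lb: "\<forall>v D. (\<forall>r<d. polyish (v r)) \<longrightarrow> nz d v \<longrightarrow> ndle d ew (app d M v) D \<longrightarrow> -E \<le> D"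
  shows "- E \<le> ndeg d ew (app d M (q j))"
proof -
  have "\<forall>r<d. polyish (q j r)" using assms(1,2) by (auto simp: latinv_def)
  thus ?thesis using lb latinv_nz_q[OF assms(1,2)] ndeg_ndle by blast
qed

lemma reduce_step:
  fixes q :: "nat \<Rightarrow> nat \<Rightarrow> 'a::field fls"
  assumes inv: "latinv d q"
    and inj: "\<forall>v. (\<forall>i<d. app d M v i = 0) \<longrightarrow> (\<forall>r<d. v r = 0)"
    and lb: "\<forall>v D. (\<forall>r<d. polyish (v r)) \<longrightarrow> nz d v \<longrightarrow> ndle d ew (app d M v) D \<longrightarrow> -E \<le> D"
    and nred: "\<not> reduced d ew (\<lambda>j. app d M (q j))"
  shows "\<exists>q'. latinv d q' \<and>
    (\<Sum>j<d. nat (ndeg d ew (app d M (q' j)) + E)) < (\<Sum>j<d. nat (ndeg d ew (app d M (q j)) + E))"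
proof -
  define \<mu> where "\<mu> j = ndeg d ew (app d M (q j))" for j
  have nzall: "\<forall>j<d. nz d (app d M (q j))" using latinv_nz_b[OF inv _ inj] by blast
  have "\<not> (\<forall>\<alpha>::nat \<Rightarrow> 'a. (\<forall>i<d. (\<Sum>j<d. \<alpha> j * lvec ew (app d M (q j)) (\<mu> j) i) = 0) \<longrightarrow> (\<forall>j<d. \<alpha> j = 0))"
    using nred nzall unfolding reduced_def \<mu>_def by simp
  then obtain \<alpha> :: "nat \<Rightarrow> 'a" where
    al: "\<forall>i<d. (\<Sum>j<d. \<alpha> j * lvec ew (app d M (q j)) (\<mu> j) i) = 0" and ex: "\<exists>j<d. \<alpha> j \<noteq> 0"
    by auto
  define J where "J = {j. j < d \<and> \<alpha> j \<noteq> 0}"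
  have Jne: "J \<noteq> {}" and Jfin: "finite J" using ex by (auto simp: J_def)
  define ms where "ms = Max (\<mu> ` J)"
  obtain js where js: "js \<in> J" "\<mu> js = ms"
  proof -
    have "ms \<in> \<mu> ` J" unfolding ms_def using Jne Jfin by (intro Max_in) auto
    thus ?thesis using that by auto
  qed
  have msge: "\<mu> l \<le> ms" if "l \<in> J" for l unfolding ms_def using Jfin that by (intro Max_ge) auto
  have jsd: "js < d" and ajs0: "\<alpha> js \<noteq> 0" using js by (auto simp: J_def)
  define a where "a l = fls_const (\<alpha> l) * fls_X_inv ^ nat (ms - \<mu> l)" for l
  have ajs: "a js = fls_const (\<alpha> js)" using js by (simp add: a_def)
  have ap: "\<forall>l<d. polyish (a l)" by (simp add: a_def polyish_X_inv_pow)
  define q' where "q' = q(js := (\<lambda>r. \<Sum>l<d. a l * q l r))"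
  have inv': "latinv d q'" unfolding q'_def by (rule colop_latinv[OF inv jsd ajs ajs0 ap])
  have bq': "app d M (q' js) i = (\<Sum>l<d. a l * app d M (q l) i)" for i
  proof -
    have "q' js = (\<lambda>r. \<Sum>l<d. a l * q l r)" by (simp add: q'_def)
    thus ?thesis by (simp only: app_lin)
  qed
  have bnd: "ndle d ew (app d M (q l)) (\<mu> l)" for l unfolding \<mu>_def by (rule ndeg_ndle)
  have tm: "dle (a l * app d M (q l) i) (ms + ew i) \<and>
     fls_nth (a l * app d M (q l) i) (-(ms + ew i)) = \<alpha> l * lvec ew (app d M (q l)) (\<mu> l) i"
    if "l < d" "i < d" for l i
  proof (cases "\<alpha> l = 0")
    case True thus ?thesis by (simp add: a_def)
  next
    case False
    hence lJ: "l \<in> J" using that by (simp add: J_def)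
    have e: "ms + ew i = int (nat (ms - \<mu> l)) + (\<mu> l + ew i)" using msge[OF lJ] by simp
    have da: "dle (a l) (int (nat (ms - \<mu> l)))" unfolding a_def by (rule dle_X_inv_pow)
    have db: "dle (app d M (q l) i) (\<mu> l + ew i)" using bnd[of l] that by (simp add: ndle_def)
    have an: "fls_nth (a l) (- int (nat (ms - \<mu> l))) = \<alpha> l" by (simp add: a_def)
    show ?thesis unfolding e using dle_mult_lead[OF da db] an by (simp add: lvec_def)
  qed
  have nd1: "ndle d ew (app d M (q' js)) ms"
    unfolding ndle_def bq' using tm by (auto intro!: dle_sum)
  have lv0: "\<forall>i<d. lvec ew (app d M (q' js)) ms i = 0"
  proof (intro allI impI)
    fix i assume i: "i < d"
    have "lvec ew (app d M (q' js)) ms i = (\<Sum>l<d. fls_nth (a l * app d M (q l) i) (-(ms + ew i)))"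
      by (simp add: lvec_def bq' fls_nth_sum)
    also have "\<dots> = (\<Sum>l<d. \<alpha> l * lvec ew (app d M (q l)) (\<mu> l) i)"
      by (rule sum.cong) (use tm i in auto)
    also have "\<dots> = 0" using al i by simp
    finally show "lvec ew (app d M (q' js)) ms i = 0" .
  qed
  have nd2: "ndle d ew (app d M (q' js)) (ms - 1)" by (rule ndle_lower[OF nd1 lv0])
  have new_le: "ndeg d ew (app d M (q' js)) \<le> ms - 1"
    by (rule ndle_ndeg[OF latinv_nz_b[OF inv' jsd inj] nd2])
  have new_ge: "- E \<le> ndeg d ew (app d M (q' js))" by (rule latinv_lb[OF inv' jsd lb])
  have old_ge: "- E \<le> \<mu> js" unfolding \<mu>_def by (rule latinv_lb[OF inv jsd lb])
  have same: "ndeg d ew (app d M (q' j)) = \<mu> j" if "j \<noteq> js" for j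
  proof -
    have "q' j = q j" using that by (simp add: q'_def)
    thus ?thesis by (simp add: \<mu>_def)
  qed
  have e1: "(\<Sum>j<d. nat (ndeg d ew (app d M (q' j)) + E))
      = nat (ndeg d ew (app d M (q' js)) + E) + (\<Sum>j\<in>{..<d} - {js}. nat (ndeg d ew (app d M (q' j)) + E))"
    using jsd by (intro sum.remove) auto
  have e2: "(\<Sum>j\<in>{..<d} - {js}. nat (ndeg d ew (app d M (q' j)) + E)) = (\<Sum>j\<in>{..<d} - {js}. nat (\<mu> j + E))"
    by (rule sum.cong) (auto simp: same)
  have e3: "nat (ndeg d ew (app d M (q' js)) + E) < nat (\<mu> js + E)"
    using new_le new_ge js by linarith
  have e4: "(\<Sum>j<d. nat (\<mu> j + E)) = nat (\<mu> js + E) + (\<Sum>j\<in>{..<d} - {js}. nat (\<mu> j + E))"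
    using jsd by (intro sum.remove) auto
  have "(\<Sum>j<d. nat (ndeg d ew (app d M (q' j)) + E)) < (\<Sum>j<d. nat (ndeg d ew (app d M (q j)) + E))"
    using e1 e2 e3 e4 unfolding \<mu>_def by linarith
  thus ?thesis using inv' by (intro exI[where x=q'] conjI)
qed

lemma reduce:
  fixes q :: "nat \<Rightarrow> nat \<Rightarrow> 'a::field fls" and M :: "nat \<Rightarrow> nat \<Rightarrow> 'a fls"
  assumes inv: "latinv d q"
    and inj: "\<forall>v. (\<forall>i<d. app d M v i = 0) \<longrightarrow> (\<forall>r<d. v r = 0)"
    and lb: "\<forall>v D. (\<forall>r<d. polyish (v r)) \<longrightarrow> nz d v \<longrightarrow> ndle d ew (app d M v) D \<longrightarrow> -E \<le> D"
  shows "\<exists>q'. latinv d q' \<and> reduced d ew (\<lambda>j. app d M (q' j))"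
proof -
  define f where "f q = (\<Sum>j<d. nat (ndeg d ew (app d M (q j)) + E))" for q :: "nat \<Rightarrow> nat \<Rightarrow> 'a fls"
  have "latinv d q0 \<longrightarrow> (\<exists>q'. latinv d q' \<and> reduced d ew (\<lambda>j. app d M (q' j)))" for q0 :: "nat \<Rightarrow> nat \<Rightarrow> 'a fls"
  proof (induction q0 rule: measure_induct_rule[of f])
    case (less q)
    show ?case
    proof
      assume iq: "latinv d q"
      show "\<exists>q'. latinv d q' \<and> reduced d ew (\<lambda>j. app d M (q' j))"
      proof (cases "reduced d ew (\<lambda>j. app d M (q j))")
        case True thus ?thesis using iq by (intro exI[where x=q] conjI)
      next
        case False
        from reduce_step[OF iq inj lb False] obtain q' where
          "latinv d q'" "f q' < f q"
          unfolding f_def by blast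
        hence "latinv d q' \<longrightarrow> (\<exists>q''. latinv d q'' \<and> reduced d ew (\<lambda>j. app d M (q'' j)))"
          using less.IH by simp
        thus ?thesis using \<open>latinv d q'\<close> by (rule mp)
      qed
    qed
  qed
  thus ?thesis using inv by simp
qed

lemma polyish_det:
  fixes A :: "'a::field fls mat"
  assumes "A \<in> carrier_mat n n" "\<And>i j. i < n \<Longrightarrow> j < n \<Longrightarrow> polyish (A $$ (i, j))"
  shows "polyish (det A)"
  unfolding det_def'[OF assms(1)]
proof (rule polyish_sum)
  fix p assume "p \<in> {p. p permutes {0..<n}}"
  hence pp: "p permutes {0..<n}" by simp
  have "polyish (\<Prod>i = 0..<n. A $$ (i, p i))"
  proof (rule polyish_prod)
    fix i assume "i \<in> {0..<n}"
    hence "i < n" "p i < n" using pp by (auto simp: permutes_in_image)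
    thus "polyish (A $$ (i, p i))" using assms(2) by simp
  qed
  thus "polyish (signof p * (\<Prod>i = 0..<n. A $$ (i, p i)))"
    by (intro polyish_mult polyish_of_int)
qed

lemma dle_of_int: "dle (of_int z :: 'a::field fls) 0"
  by (simp add: fls_of_int dle_const)

lemma volume:
  fixes q M :: "nat \<Rightarrow> nat \<Rightarrow> 'a::field fls"
  assumes inv: "latinv d q" and detM: "det (mat d d (\<lambda>(i,k). M i k)) = 1"
  shows "0 \<le> (\<Sum>j<d. ndeg d ew (app d M (q j))) + (\<Sum>i<d. ew i)"
proof -
  have "\<forall>i\<in>{..<d}. \<exists>c. (\<forall>j<d. polyish (c j)) \<and> (\<forall>r<d. (\<Sum>j<d. c j * q j r) = (if r = i then 1 else 0))"
    using inv unfolding latinv_def by simp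
  from bchoice[OF this] obtain cf where
    cf: "\<forall>i\<in>{..<d}. (\<forall>j<d. polyish (cf i j)) \<and> (\<forall>r<d. (\<Sum>j<d. cf i j * q j r) = (if r = i then 1 else 0))"
    by (elim exE)
  define QL where "QL = mat d d (\<lambda>(r,j). q j r)"
  define C where "C = mat d d (\<lambda>(j,i). cf i j)"
  define MM where "MM = mat d d (\<lambda>(i,k). M i k)"
  have QLc: "QL \<in> carrier_mat d d" and Cc: "C \<in> carrier_mat d d" and MMc: "MM \<in> carrier_mat d d"
    by (auto simp: QL_def C_def MM_def)
  have "QL * C = 1\<^sub>m d"
  proof (rule eq_matI)
    fix r i assume "r < dim_row (1\<^sub>m d :: 'a fls mat)" "i < dim_col (1\<^sub>m d :: 'a fls mat)"
    hence ri: "r < d" "i < d" by auto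
    have "(QL * C) $$ (r, i) = (\<Sum>j\<in>{0..<d}. q j r * cf i j)"
      using ri by (simp add: QL_def C_def scalar_prod_def)
    also have "\<dots> = (\<Sum>j<d. cf i j * q j r)" by (simp add: atLeast0LessThan mult.commute)
    also have "\<dots> = (if r = i then 1 else 0)" using cf ri by simp
    finally show "(QL * C) $$ (r, i) = 1\<^sub>m d $$ (r, i)" using ri by simp
  qed (auto simp: QL_def C_def)
  hence "det QL * det C = 1" using det_mult[OF QLc Cc] by simp
  moreover have pQ: "polyish (det QL)"
    by (rule polyish_det[OF QLc]) (use inv in \<open>auto simp: QL_def latinv_def\<close>)
  moreover have pC: "polyish (det C)"
    by (rule polyish_det[OF Cc]) (use cf in \<open>auto simp: C_def\<close>)
  ultimately have sub0: "fls_subdegree (det QL) = 0"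
  proof -
    assume e: "det QL * det C = 1"
    hence nz: "det QL \<noteq> 0" "det C \<noteq> 0" by auto
    have "fls_subdegree (det QL) + fls_subdegree (det C) = 0"
      using e nz by (metis fls_one_subdegree fls_subdegree_mult)
    moreover have "fls_subdegree (det QL) \<le> 0" "fls_subdegree (det C) \<le> 0"
      using nz pQ pC polyish_nz_subdeg by auto
    ultimately show ?thesis by linarith
  qed
  have nzQ: "det QL \<noteq> 0" using \<open>det QL * det C = 1\<close> by auto
  define B where "B = MM * QL"
  have Bc: "B \<in> carrier_mat d d" using MMc QLc by (simp add: B_def)
  have detB: "det B = det QL" using det_mult[OF MMc QLc] detM by (simp add: B_def MM_def)
  have Bij: "B $$ (i, j) = app d M (q j) i" if "i < d" "j < d" for i j
    using that by (simp add: B_def MM_def QL_def scalar_prod_def app_def atLeast0LessThan)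
  define \<mu> where "\<mu> j = ndeg d ew (app d M (q j))" for j
  define D where "D = (\<Sum>j<d. \<mu> j) + (\<Sum>i<d. ew i)"
  have "dle (det B) D"
    unfolding det_def'[OF Bc]
  proof (rule dle_sum)
    fix p assume "p \<in> {p. p permutes {0..<d}}"
    hence pp: "p permutes {0..<d}" by simp
    have "dle (\<Prod>i = 0..<d. B $$ (i, p i)) (\<Sum>i = 0..<d. \<mu> (p i) + ew i)"
    proof (rule dle_prod)
      fix i assume "i \<in> {0..<d}"
      hence i: "i < d" "p i < d" using pp by (auto simp: permutes_in_image)
      have "ndle d ew (app d M (q (p i))) (\<mu> (p i))" unfolding \<mu>_def by (rule ndeg_ndle)
      thus "dle (B $$ (i, p i)) (\<mu> (p i) + ew i)" using i by (simp add: Bij ndle_def)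
    qed
    moreover have "(\<Sum>i = 0..<d. \<mu> (p i) + ew i) = D"
    proof -
      have "(\<Sum>i = 0..<d. \<mu> (p i)) = (\<Sum>i = 0..<d. \<mu> i)"
        using sum.permute[OF pp, of \<mu>] by (simp add: comp_def)
      thus ?thesis by (simp add: D_def sum.distrib atLeast0LessThan)
    qed
    ultimately have "dle (\<Prod>i = 0..<d. B $$ (i, p i)) D" by simp
    hence "dle (signof p * (\<Prod>i = 0..<d. B $$ (i, p i))) (0 + D)"
      by (intro dle_mult dle_of_int)
    thus "dle (signof p * (\<Prod>i = 0..<d. B $$ (i, p i))) D" by simp
  qed
  moreover have "fls_nth (det B) 0 \<noteq> 0"
    using detB sub0 nzQ by (metis nth_fls_subdegree_nonzero)
  ultimately have "\<not> (0 < - D)" by (auto simp: dle_def)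
  thus ?thesis unfolding D_def \<mu>_def by linarith
qed

lemma sum_fun_apply: "(\<Sum>j\<in>S. f j) (r::'b) = (\<Sum>j\<in>S. (f j r :: 'c::comm_monoid_add))"
  by (induction S rule: infinite_finite_induct) auto

lemma count_small:
  fixes q M w :: "nat \<Rightarrow> nat \<Rightarrow> 'a::field fls"
  assumes inv: "latinv d q" and red: "reduced d ew (\<lambda>j. app d M (q j))"
    and wp: "\<forall>s<t. \<forall>r<d. polyish (w s r)"
    and ws: "\<forall>s<t. ndle d ew (app d M (w s)) 0"
    and li: "lin_indep d t w"
  shows "t \<le> card {j. j < d \<and> ndeg d ew (app d M (q j)) \<le> 0}"
proof -
  have "\<forall>i\<in>{..<d}. \<exists>c. (\<forall>j<d. polyish (c j)) \<and> (\<forall>r<d. (\<Sum>j<d. c j * q j r) = (if r = i then 1 else 0))"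
    using inv unfolding latinv_def by simp
  from bchoice[OF this] obtain cf where
    cf: "\<forall>i\<in>{..<d}. (\<forall>j<d. polyish (cf i j)) \<and> (\<forall>r<d. (\<Sum>j<d. cf i j * q j r) = (if r = i then 1 else 0))"
    by (elim exE)
  define \<mu> where "\<mu> j = ndeg d ew (app d M (q j))" for j
  define S where "S = {j. j < d \<and> \<mu> j \<le> 0}"
  define cc where "cc s j = (\<Sum>i<d. w s i * cf i j)" for s j
  have ccp: "polyish (cc s j)" if "s < t" "j < d" for s j
    unfolding cc_def using wp cf that by (auto intro!: polyish_sum polyish_mult)
  have wrep: "w s r = (\<Sum>j<d. cc s j * q j r)" if "r < d" for s r
  proof -
    have "(\<Sum>j<d. cc s j * q j r) = (\<Sum>j<d. \<Sum>i<d. w s i * (cf i j * q j r))"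
      by (simp add: cc_def sum_distrib_right mult.assoc)
    also have "\<dots> = (\<Sum>i<d. w s i * (\<Sum>j<d. cf i j * q j r))"
      by (subst sum.swap) (simp add: sum_distrib_left)
    also have "\<dots> = (\<Sum>i<d. w s i * (if r = i then 1 else 0))"
      by (rule sum.cong) (use cf that in auto)
    also have "\<dots> = (\<Sum>i<d. if i = r then w s r else 0)"
      by (rule sum.cong) auto
    also have "\<dots> = w s r" using that by simp
    finally show ?thesis by simp
  qed
  have appw: "app d M (w s) i = (\<Sum>j<d. cc s j * app d M (q j) i)" for s i
  proof -
    have "app d M (w s) i = app d M (\<lambda>r. \<Sum>j<d. cc s j * q j r) i"
      unfolding app_def by (rule sum.cong) (auto simp: wrep)
    thus ?thesis by (simp only: app_lin)
  qed
  have cc0: "cc s j = 0" if "s < t" "j < d" "j \<notin> S" for s j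
  proof -
    have "ndle d ew (\<lambda>i. \<Sum>j<d. cc s j * app d M (q j) i) 0"
      using ws that(1) by (simp add: appw[symmetric])
    hence "dle (cc s j) (0 - ndeg d ew (app d M (q j)))"
      by (rule orth[OF red _ that(2)])
    moreover have "\<mu> j > 0" using that by (auto simp: S_def)
    ultimately show ?thesis using polyish_dle_neg[OF ccp[OF that(1,2)]] by (simp add: \<mu>_def)
  qed
  have wrepS: "w s r = (\<Sum>j\<in>S. cc s j * q j r)" if "s < t" "r < d" for s r
  proof -
    have "w s r = (\<Sum>j<d. cc s j * q j r)" by (rule wrep[OF that(2)])
    also have "\<dots> = (\<Sum>j\<in>S. cc s j * q j r)"
      by (rule sum.mono_neutral_right) (use cc0 that in \<open>auto simp: S_def\<close>)
    finally show ?thesis .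
  qed
  interpret vs: vector_space "\<lambda>(c::'a fls) (v::nat \<Rightarrow> 'a fls). (\<lambda>i. c * v i)"
    by unfold_locales (auto simp: fun_eq_iff algebra_simps)
  define wr where "wr s = (\<lambda>r. if r < d then w s r else 0)" for s
  define qr where "qr j = (\<lambda>r. if r < d then q j r else 0)" for j
  have inj: "inj_on wr {..<t}"
  proof (rule inj_onI)
    fix s1 s2 assume s: "s1 \<in> {..<t}" "s2 \<in> {..<t}" "wr s1 = wr s2"
    show "s1 = s2"
    proof (rule ccontr)
      assume ne: "s1 \<noteq> s2"
      define c where "c s = (if s = s1 then 1 else if s = s2 then -1 else (0::'a fls))" for s
      have "\<forall>j<d. (\<Sum>s<t. c s * w s j) = 0"
      proof (intro allI impI)
        fix j assume j: "j < d"
        have "(\<Sum>s<t. c s * w s j) = (\<Sum>s<t. (if s = s1 then w s1 j else 0) + (if s = s2 then - w s2 j else 0))"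
          by (rule sum.cong) (use ne in \<open>auto simp: c_def\<close>)
        also have "\<dots> = w s1 j - w s2 j" using s by (simp add: sum.distrib)
        also have "\<dots> = 0" using s(3) j by (simp add: wr_def fun_eq_iff) (metis)
        finally show "(\<Sum>s<t. c s * w s j) = 0" .
      qed
      hence "c s1 = 0" using li[unfolded lin_indep_def, rule_format, of c] s by blast
      thus False by (simp add: c_def)
    qed
  qed
  have indep: "vs.independent (wr ` {..<t})"
  proof (rule vs.independent_if_scalars_zero)
    show "finite (wr ` {..<t})" by simp
  next
    fix f x assume h: "(\<Sum>x\<in>wr ` {..<t}. (\<lambda>i. f x * x i)) = 0" and x: "x \<in> wr ` {..<t}"
    have "(\<Sum>s<t. (\<lambda>i. f (wr s) * wr s i)) = 0"
      using h by (simp add: sum.reindex[OF inj])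
    hence h2: "\<forall>x. (\<Sum>s<t. f (wr s) * wr s x) = 0"
      by (simp add: fun_eq_iff sum_fun_apply)
    have "\<forall>j<d. (\<Sum>s<t. f (wr s) * w s j) = 0"
    proof (intro allI impI)
      fix j assume j: "j < d"
      have "(\<Sum>s<t. f (wr s) * w s j) = (\<Sum>s<t. f (wr s) * wr s j)" using j by (simp add: wr_def)
      thus "(\<Sum>s<t. f (wr s) * w s j) = 0" using h2 by simp
    qed
    hence "\<forall>s<t. f (wr s) = 0" using li[unfolded lin_indep_def, rule_format, of "\<lambda>s. f (wr s)"] by blast
    thus "f x = 0" using x by auto
  qed
  have sp: "wr ` {..<t} \<subseteq> vs.span (qr ` S)"
  proof
    fix x assume "x \<in> wr ` {..<t}"
    then obtain s where s: "s < t" "x = wr s" by auto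
    have "wr s = (\<Sum>j\<in>S. (\<lambda>i. cc s j * qr j i))"
      by (auto simp: fun_eq_iff sum_fun_apply wr_def qr_def wrepS[OF s(1)])
    also have "\<dots> \<in> vs.span (qr ` S)"
      by (intro vs.span_sum vs.span_scale vs.span_base) auto
    finally show "x \<in> vs.span (qr ` S)" using s by simp
  qed
  have "card (wr ` {..<t}) \<le> card (qr ` S)"
    using vs.independent_span_bound[OF _ indep sp] by (simp add: S_def)
  moreover have "card (wr ` {..<t}) = t" using card_image[OF inj] by simp
  moreover have "card (qr ` S) \<le> card S" by (rule card_image_le) (simp add: S_def)
  ultimately show ?thesis by (simp add: S_def \<mu>_def)
qed

definition Mx :: "nat \<Rightarrow> nat \<Rightarrow> (nat \<Rightarrow> nat \<Rightarrow> 'a::field fls) \<Rightarrow> nat \<Rightarrow> nat \<Rightarrow> 'a fls" where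
  "Mx m n A i k = (if i < m then (if k = i then 1 else 0)
                   else (if k < m then A k (i - m) else (if k = i then 1 else 0)))"

lemma appM:
  assumes "i < m + n"
  shows "app (m + n) (Mx m n A) v i = (if i < m then v i else (\<Sum>k<m. A k (i - m) * v k) + v i)"
proof (cases "i < m")
  case True
  have "app (m + n) (Mx m n A) v i = (\<Sum>k<m + n. if k = i then v i else 0)"
    unfolding app_def by (rule sum.cong) (use True in \<open>auto simp: Mx_def\<close>)
  also have "\<dots> = v i" using assms by simp
  finally show ?thesis using True by simp
next
  case False
  have U: "{..<m + n} = {..<m} \<union> {m..<m + n}" by auto
  have "app (m + n) (Mx m n A) v i = (\<Sum>k<m. Mx m n A i k * v k) + (\<Sum>k\<in>{m..<m + n}. Mx m n A i k * v k)"
    unfolding app_def U by (rule sum.union_disjoint) auto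
  also have "(\<Sum>k<m. Mx m n A i k * v k) = (\<Sum>k<m. A k (i - m) * v k)"
    by (rule sum.cong) (use False in \<open>auto simp: Mx_def\<close>)
  also have "(\<Sum>k\<in>{m..<m + n}. Mx m n A i k * v k) = (\<Sum>k\<in>{m..<m + n}. if k = i then v i else 0)"
    by (rule sum.cong) (use False in \<open>auto simp: Mx_def\<close>)
  also have "\<dots> = v i" using assms False by simp
  finally show ?thesis using False by simp
qed

lemma detMx: "det (mat (m + n) (m + n) (\<lambda>(i, k). Mx m n A i k)) = 1"
proof -
  let ?B = "mat (m + n) (m + n) (\<lambda>(i, k). Mx m n A i k)"
  have "det ?B = prod_list (diag_mat ?B)"
    by (rule det_lower_triangular[of "m + n"]) (auto simp: Mx_def)
  also have "diag_mat ?B = replicate (m + n) 1"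
    by (rule nth_equalityI) (auto simp: diag_mat_def Mx_def)
  finally show ?thesis by simp
qed

lemma injMx: "\<forall>v. (\<forall>i<m + n. app (m + n) (Mx m n A) v i = 0) \<longrightarrow> (\<forall>r<m + n. v r = 0)"
proof (intro allI impI)
  fix v r assume h: "\<forall>i<m + n. app (m + n) (Mx m n A) v i = 0" and r: "r < m + n"
  have v1: "v k = 0" if "k < m" for k using h[rule_format, of k] that by (simp add: appM)
  show "v r = 0"
  proof (cases "r < m")
    case True thus ?thesis by (rule v1)
  next
    case False
    have "(\<Sum>k<m. A k (r - m) * v k) + v r = 0" using h[rule_format, OF r] False r by (simp add: appM)
    thus ?thesis using v1 by simp
  qed
qed

lemma lbMx:
  fixes A :: "nat \<Rightarrow> nat \<Rightarrow> 'a::field fls" and m n :: nat and e1 e2 :: int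
  defines "ew \<equiv> (\<lambda>i. if i < m then e1 else e2)"
  shows "\<forall>v D. (\<forall>r<m + n. polyish (v r)) \<longrightarrow> nz (m + n) v \<longrightarrow> ndle (m + n) ew (app (m + n) (Mx m n A) v) D \<longrightarrow> - max e1 e2 \<le> D"
proof (intro allI impI)
  fix v :: "nat \<Rightarrow> 'a fls" and D
  assume p: "\<forall>r<m + n. polyish (v r)" and nzv: "nz (m + n) v" and nd: "ndle (m + n) ew (app (m + n) (Mx m n A) v) D"
  show "- max e1 e2 \<le> D"
  proof (rule ccontr)
    assume "\<not> - max e1 e2 \<le> D"
    hence neg: "D + e1 < 0" "D + e2 < 0" by auto
    have v1: "v k = 0" if "k < m" for k
    proof -
      have "dle (app (m + n) (Mx m n A) v k) (D + ew k)" using nd that by (simp add: ndle_def)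
      hence dk: "dle (v k) (D + e1)" using that by (simp add: appM ew_def)
      have "polyish (v k)" using p that by simp
      thus ?thesis using polyish_dle_neg dk neg(1) by blast
    qed
    have "v k = 0" if "k < m + n" for k
    proof (cases "k < m")
      case True thus ?thesis by (rule v1)
    next
      case False
      have "dle (app (m + n) (Mx m n A) v k) (D + ew k)" using nd that by (simp add: ndle_def)
      hence dk: "dle (v k) (D + e2)" using that False v1 by (simp add: appM ew_def)
      have "polyish (v k)" using p that by simp
      thus ?thesis using polyish_dle_neg dk neg(2) by blast
    qed
    thus False using nzv by (auto simp: nz_def)
  qed
qed

lemma dotp_tildeA:
  assumes "l < n"
  shows "dotp (m + n) x (col (tildeA m n A) l) = (\<Sum>j<m. x j * A j l) + x (m + l)"
proof -
  have U: "{..<m + n} = {..<m} \<union> {m..<m + n}" by auto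
  have "dotp (m + n) x (col (tildeA m n A) l) = (\<Sum>j<m. x j * tildeA m n A j l) + (\<Sum>j\<in>{m..<m + n}. x j * tildeA m n A j l)"
    unfolding dotp_def Defs.col_def U by (rule sum.union_disjoint) auto
  also have "(\<Sum>j<m. x j * tildeA m n A j l) = (\<Sum>j<m. x j * A j l)"
    by (rule sum.cong) (use assms in \<open>auto simp: tildeA_def\<close>)
  also have "(\<Sum>j\<in>{m..<m + n}. x j * tildeA m n A j l) = (\<Sum>j\<in>{m..<m + n}. if j = m + l then x (m + l) else 0)"
    by (rule sum.cong) (use assms in \<open>auto simp: tildeA_def\<close>)
  also have "\<dots> = x (m + l)" using assms by simp
  finally show ?thesis .
qed

lemma dotp_tildeA_star:
  assumes "l < m"
  shows "dotp (m + n) x (col (tildeA_star m n A) l) = (\<Sum>j<n. x j * A l j) + x (n + l)"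
proof -
  have U: "{..<m + n} = {..<n} \<union> {n..<m + n}" by auto
  have "dotp (m + n) x (col (tildeA_star m n A) l) = (\<Sum>j<n. x j * tildeA_star m n A j l) + (\<Sum>j\<in>{n..<m + n}. x j * tildeA_star m n A j l)"
    unfolding dotp_def Defs.col_def U by (rule sum.union_disjoint) auto
  also have "(\<Sum>j<n. x j * tildeA_star m n A j l) = (\<Sum>j<n. x j * A l j)"
    by (rule sum.cong) (use assms in \<open>auto simp: tildeA_star_def\<close>)
  also have "(\<Sum>j\<in>{n..<m + n}. x j * tildeA_star m n A j l) = (\<Sum>j\<in>{n..<m + n}. if j = n + l then x (n + l) else 0)"
    by (rule sum.cong) (use assms in \<open>auto simp: tildeA_star_def\<close>)
  also have "\<dots> = x (n + l)" using assms by simp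
  finally show ?thesis .
qed

lemma poly_to_L_uminus: "poly_to_L (- p) = - poly_to_L p"
  by (rule fls_eqI) (simp add: poly_to_L_nth)

lemma matnorm_entry:
  assumes "a < m" "b < n"
  shows "labs (A a b) \<le> matnorm m n A"
proof -
  have "{labs (A i j) | i j. i < m \<and> j < n} = (\<lambda>(i, j). labs (A i j)) ` ({..<m} \<times> {..<n})" by auto
  hence fin: "finite {labs (A i j) | i j. i < m \<and> j < n}" by simp
  show ?thesis unfolding matnorm_def by (rule Max_ge[OF fin]) (use assms in blast)
qed

lemma matnorm_zero:
  assumes "m \<ge> 1" "n \<ge> 1" "\<And>i j. i < m \<Longrightarrow> j < n \<Longrightarrow> A i j = 0"
  shows "matnorm m n A = 0"
proof -
  have "{labs (A i j) | i j. i < m \<and> j < n} = {0}"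
    using assms by (auto intro!: exI[of _ 0])
  thus ?thesis by (simp add: matnorm_def)
qed

lemma ln_labs:
  fixes x :: "'a::{field,finite} fls"
  assumes "x \<noteq> 0"
  shows "ln (labs x) = real_of_int (- fls_subdegree x) * ln (kk TYPE('a))"
proof -
  have k: "kk TYPE('a) > 0" using kk_gt1[where 'a='a] by simp
  have "kk TYPE('a) powr real_of_int (- fls_subdegree x) = kk TYPE('a) powi (- fls_subdegree x)"
    by (rule powr_real_of_int') (use k in auto)
  hence "labs x = kk TYPE('a) powr real_of_int (- fls_subdegree x)"
    using assms by (simp add: labs_alt)
  thus ?thesis using k by simp
qed

lemma labs_lt_powr_dle:
  fixes x :: "'a::{field,finite} fls"
  assumes "labs x < R powr a" "R > 0" "a * ln R \<le> real_of_int (e + 1) * ln (kk TYPE('a))"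
  shows "dle x e"
proof (cases "x = 0")
  case False
  have lk: "ln (kk TYPE('a)) > 0" using kk_gt1[where 'a='a] by simp
  have "ln (labs x) < ln (R powr a)" using assms(1,2) labs_pos[OF False] by (subst ln_less_cancel_iff) auto
  hence "real_of_int (- fls_subdegree x) * ln (kk TYPE('a)) < real_of_int (e + 1) * ln (kk TYPE('a))"
    using ln_labs[OF False] assms(2,3) by simp
  hence "real_of_int (- fls_subdegree x) < real_of_int (e + 1)"
    using lk mult_less_cancel_right_pos by blast
  hence "- fls_subdegree x < e + 1" by linarith
  thus ?thesis by (simp add: dle_iff_subdeg)
qed simp

lemma dle_powr_labs_lt:
  fixes x :: "'a::{field,finite} fls"
  assumes "dle x e" "R > 0" "real_of_int e * ln (kk TYPE('a)) < T * ln R"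
  shows "labs x < R powr T"
proof (cases "x = 0")
  case False
  have lk: "ln (kk TYPE('a)) > 0" using kk_gt1[where 'a='a] by simp
  have "- fls_subdegree x \<le> e" using assms(1) False by (simp add: dle_iff_subdeg)
  hence "real_of_int (- fls_subdegree x) * ln (kk TYPE('a)) \<le> real_of_int e * ln (kk TYPE('a))"
    using lk by (intro mult_right_mono) auto
  hence "ln (labs x) < ln (R powr T)" using ln_labs[OF False] assms(2,3) by simp
  thus ?thesis using labs_pos[OF False] assms(2) by (subst (asm) ln_less_cancel_iff) auto
qed (use assms(2) in simp)

lemma ineq_u:
  fixes x y h g T U E1 E2 lk lR :: real
  assumes x: "x \<ge> 2" and y: "y \<ge> 1" and lR: "lR > 0" and lk: "lk > 0" "lk < lR"
    and e1: "E1 < h * lR" and e2: "g * lR \<le> E2 + lk" "E2 < g * lR"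
    and U: "(x - 1) * U \<ge> - (x * E1 + y * E2)"
    and ex: "x * h + y * g + (x - 1) * (1 - g) \<le> (x - 1) * T"
  shows "- E2 - U < T * lR"
proof -
  have a: "x * E1 < x * (h * lR)" using e1 x by (intro mult_strict_left_mono) auto
  have b: "y * E2 < y * (g * lR)" using e2 y by (intro mult_strict_left_mono) auto
  have c: "(x - 1) * (- E2) \<le> (x - 1) * (lk - g * lR)" using e2 x by (intro mult_left_mono) auto
  have c2: "(x - 1) * (lk - g * lR) < (x - 1) * (lR - g * lR)" using lk x by (intro mult_strict_left_mono) auto
  have d: "(x * h + y * g + (x - 1) * (1 - g)) * lR \<le> ((x - 1) * T) * lR" using ex lR by (intro mult_right_mono) auto
  have "(x - 1) * (- E2 - U) < (x - 1) * (T * lR)"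
    using a b c c2 d U by (simp add: algebra_simps)
  thus ?thesis using x by (simp add: mult_less_cancel_left)
qed

lemma ineq_w:
  fixes x y h g T U E1 E2 lR :: real
  assumes x: "x \<ge> 2" and y: "y \<ge> 0" and lR: "lR > 0"
    and e1: "E1 < h * lR" and e2: "E2 < g * lR"
    and U: "(x - 1) * U \<ge> - (x * E1 + y * E2)"
    and ex: "h + y * g \<le> (x - 1) * T"
  shows "- E1 - U < T * lR"
proof -
  have b: "y * E2 \<le> y * (g * lR)" using e2 y by (intro mult_left_mono) auto
  have d: "(h + y * g) * lR \<le> ((x - 1) * T) * lR" using ex lR by (intro mult_right_mono) auto
  have "(x - 1) * (- E1 - U) < (x - 1) * (T * lR)"
    using e1 b d U by (simp add: algebra_simps)
  thus ?thesis using x by (simp add: mult_less_cancel_left)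
qed

lemma ineq_neg:
  fixes x y h g E1 E2 lR :: real
  assumes x: "x > 0" and y: "y > 0" and lR: "lR > 0"
    and e1: "E1 < h * lR" and e2: "E2 < g * lR" and ex: "x * h + y * g \<le> 0"
  shows "x * E1 + y * E2 < 0"
proof -
  have a: "x * E1 < x * (h * lR)" using e1 x by (intro mult_strict_left_mono) auto
  have b: "y * E2 < y * (g * lR)" using e2 y by (intro mult_strict_left_mono) auto
  have d: "(x * h + y * g) * lR \<le> 0" using ex lR by (simp add: mult_nonpos_nonneg)
  show ?thesis using a b d by (simp add: algebra_simps)
qed

lemma exps:
  fixes x y I :: real
  assumes x: "x \<ge> 1" and y: "y \<ge> 1" and I: "I \<ge> 0"
  defines "\<tau> \<equiv> x / (x + y)"
  defines "D \<equiv> x * (x + y)^2" and "Ds \<equiv> y * (x + y)^2"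
  defines "h \<equiv> - D + y * (\<tau> + I + 1)" and "g \<equiv> - D + y * \<tau> - x * (1 + I)"
  defines "Tu \<equiv> - Ds + x * (1 + I)" and "Tw \<equiv> - Ds - y * (1 + I) - x"
  shows "x * h + y * g \<le> 0"
    and "x * h + y * g + (x - 1) * (1 - g) \<le> (x - 1) * Tu"
    and "h + y * g \<le> (x - 1) * Tw"
    and "Tw < 0"
    and "h - (x + y) * (1 + I) = g"
    and "- D - x * (\<tau> + I + 1) - y \<le> g"
proof -
  have xy: "x + y > 0" using x y by simp
  have tx: "\<tau> * (x + y) = x" using xy by (simp add: \<tau>_def)
  have t0: "\<tau> \<ge> 0" "\<tau> \<le> 1" using x y by (auto simp: \<tau>_def field_simps)
  have s3: "(x + y)^3 \<ge> (x + y)^2"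
    using xy x y by (simp add: power3_eq_cube power2_eq_square mult_le_cancel_right1 mult_right_mono)
  have s2: "(x + y)^2 = x^2 + 2*x*y + y^2" by (simp add: power2_eq_square algebra_simps)
  have xx: "x^2 \<ge> x" using x by (simp add: power2_eq_square)
  have xyp: "x * y \<ge> 0" "y^2 \<ge> 0" "x * y \<ge> y" using x y by (auto simp: mult_right_mono)
  have id1: "x * h + y * g = - (x + y) * D + x * y"
  proof -
    have "x * h + y * g = - (x + y) * D + y * (\<tau> * (x + y))"
      by (simp add: h_def g_def algebra_simps)
    thus ?thesis using tx by simp
  qed
  have D3: "(x + y) * D = x * (x + y)^3" by (simp add: D_def power3_eq_cube power2_eq_square algebra_simps)
  have "x * (x + y)^3 \<ge> x * y"
  proof -
    have "(x + y)^3 \<ge> y" using s3 s2 xx xyp x by linarith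
    thus ?thesis using x by (intro mult_left_mono) auto
  qed
  thus "x * h + y * g \<le> 0" using id1 D3 by linarith
  have id2: "(x - 1) * Tu - (x * h + y * g + (x - 1) * (1 - g)) = (x + y)^3 - x * y - x + 1 + (x - 1) * y * \<tau>"
  proof -
    have "(x - 1) * Tu - (x * h + y * g + (x - 1) * (1 - g))
        = (x + y)^3 - y * (\<tau> * (x + y)) - x + 1 + (x - 1) * y * \<tau>"
      by (simp add: Tu_def h_def g_def D_def Ds_def power3_eq_cube power2_eq_square algebra_simps)
    moreover have "y * (\<tau> * (x + y)) = x * y" using tx by simp
    ultimately show ?thesis by linarith
  qed
  have "(x - 1) * y * \<tau> \<ge> 0" using x y t0 by simp
  thus "x * h + y * g + (x - 1) * (1 - g) \<le> (x - 1) * Tu"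
    using id2 s3 s2 xx xyp by linarith
  have id3: "(x - 1) * Tw - (h + y * g) = (x + y)^3 - x * (x - 1) - y * \<tau> * (1 + y)"
    by (simp add: Tw_def h_def g_def D_def Ds_def power3_eq_cube power2_eq_square algebra_simps)
  have "y * \<tau> * (1 + y) \<le> y * 1 * (1 + y)" using t0 y by (intro mult_right_mono mult_left_mono) auto
  moreover have "x * (x - 1) = x^2 - x" by (simp add: power2_eq_square algebra_simps)
  moreover have "y * 1 * (1 + y) = y + y^2" by (simp add: power2_eq_square algebra_simps)
  moreover have "2 * x * y \<ge> y" using xyp by linarith
  ultimately have A: "(x+y)^3 - x*(x-1) - y*\<tau>*(1+y) \<ge> (x+y)^2 - (x^2 - x) - (y + y^2)"
    using s3 by linarith
  have B: "(x+y)^2 - (x^2 - x) - (y + y^2) = 2*x*y + x - y" using s2 by simp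
  have C: "2*x*y + x - y \<ge> 0" using xyp x by linarith
  have "(x - 1) * Tw - (h + y * g) \<ge> 0" using id3 A B C by linarith
  thus "h + y * g \<le> (x - 1) * Tw" by linarith
  have "Ds \<ge> 0" using y by (simp add: Ds_def)
  thus "Tw < 0" using x y I by (simp add: Tw_def) (smt (verit) mult_nonneg_nonneg)
  show "h - (x + y) * (1 + I) = g" by (simp add: h_def g_def algebra_simps)
  have "- D - x * (\<tau> + I + 1) - y - g = - (x + y) * \<tau> - y" by (simp add: g_def algebra_simps)
  also have "\<dots> = - x - y" using tx by (simp add: algebra_simps)
  finally show "- D - x * (\<tau> + I + 1) - y \<le> g" using x y by simp
qed

lemma span_rep:
  fixes q :: "nat \<Rightarrow> nat \<Rightarrow> 'a::field fls"
  assumes inv: "latinv d q"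
  obtains cf where "\<forall>i<d. \<forall>j<d. polyish (cf i j)"
    and "\<forall>z r. r < d \<longrightarrow> z r = (\<Sum>j<d. (\<Sum>i<d. z i * cf i j) * q j r)"
    and "\<forall>j<d. \<forall>jm<d. (\<Sum>r<d. cf r jm * q j r) = (if j = jm then 1 else 0)"
proof -
  have "\<forall>i\<in>{..<d}. \<exists>c. (\<forall>j<d. polyish (c j)) \<and> (\<forall>r<d. (\<Sum>j<d. c j * q j r) = (if r = i then 1 else 0))"
    using inv unfolding latinv_def by simp
  from bchoice[OF this] obtain cf where
    cf: "\<forall>i\<in>{..<d}. (\<forall>j<d. polyish (cf i j)) \<and> (\<forall>r<d. (\<Sum>j<d. cf i j * q j r) = (if r = i then 1 else 0))"
    by (elim exE)
  have rep: "z r = (\<Sum>j<d. (\<Sum>i<d. z i * cf i j) * q j r)" if "r < d" for z :: "nat \<Rightarrow> 'a fls" and r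
  proof -
    have "(\<Sum>j<d. (\<Sum>i<d. z i * cf i j) * q j r) = (\<Sum>j<d. \<Sum>i<d. z i * (cf i j * q j r))"
      by (simp add: sum_distrib_right mult.assoc)
    also have "\<dots> = (\<Sum>i<d. z i * (\<Sum>j<d. cf i j * q j r))"
      by (subst sum.swap) (simp add: sum_distrib_left)
    also have "\<dots> = (\<Sum>i<d. z i * (if r = i then 1 else 0))"
      by (rule sum.cong) (use cf that in auto)
    also have "\<dots> = (\<Sum>i<d. if i = r then z r else 0)"
      by (rule sum.cong) auto
    also have "\<dots> = z r" using that by simp
    finally show ?thesis by simp
  qed
  have orthc: "(\<Sum>r<d. cf r jm * q j r) = (if j = jm then 1 else 0)" if "j < d" "jm < d" for j jm
  proof -
    define co where "co l = (\<Sum>i<d. q j i * cf i l) - (if l = j then 1 else 0)" for l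
    have "\<forall>r<d. (\<Sum>l<d. co l * q l r) = 0"
    proof (intro allI impI)
      fix r assume r: "r < d"
      have "(\<Sum>l<d. co l * q l r) = (\<Sum>l<d. (\<Sum>i<d. q j i * cf i l) * q l r) - (\<Sum>l<d. (if l = j then 1 else 0) * q l r)"
        by (simp add: co_def algebra_simps sum_subtractf)
      also have "(\<Sum>l<d. (if l = j then 1 else 0) * q l r) = (\<Sum>l<d. if l = j then q j r else 0)"
        by (rule sum.cong) auto
      also have "\<dots> = q j r" using that by simp
      also have "(\<Sum>l<d. (\<Sum>i<d. q j i * cf i l) * q l r) = q j r" using rep[OF r, of "q j"] by simp
      finally show "(\<Sum>l<d. co l * q l r) = 0" by simp
    qed
    moreover have "\<forall>c. (\<forall>r<d. (\<Sum>j<d. c j * q j r) = 0) \<longrightarrow> (\<forall>j<d. c j = 0)"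
      using inv unfolding latinv_def by (elim conjE)
    ultimately have "\<forall>l<d. co l = 0" by (rule mp[OF spec[where x=co], rotated])
    hence "co jm = 0" using that by simp
    thus ?thesis by (simp add: co_def mult.commute)
  qed
  show ?thesis
  proof (rule that)
    show "\<forall>i<d. \<forall>j<d. polyish (cf i j)" using cf by auto
    show "\<forall>z r. r < d \<longrightarrow> z r = (\<Sum>j<d. (\<Sum>i<d. z i * cf i j) * q j r)" using rep by blast
    show "\<forall>j<d. \<forall>jm<d. (\<Sum>r<d. cf r jm * q j r) = (if j = jm then 1 else 0)" using orthc by blast
  qed
qed

lemma Max_lt_iff_fin:
  fixes f :: "nat \<Rightarrow> real"
  assumes "N \<ge> 1"
  shows "Max (f ` {..<N}) < C \<longleftrightarrow> (\<forall>l<N. f l < C)"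
proof -
  have "0 \<in> {..<N}" using assms by simp
  hence ne: "f ` {..<N} \<noteq> {}" by blast
  show ?thesis using ne by (simp add: Max_less_iff) auto
qed

lemma Max_pos_fin:
  fixes f :: "nat \<Rightarrow> real"
  assumes "l < N" "f l > 0"
  shows "0 < Max (f ` {..<N})"
proof -
  have "f l \<le> Max (f ` {..<N})" using assms by (intro Max_ge) auto
  thus ?thesis using assms by linarith
qed

lemma primal_est:
  fixes A0 As :: "nat \<Rightarrow> nat \<Rightarrow> 'a::{field,finite} fls" and x :: "nat \<Rightarrow> 'a fls"
  assumes As: "As \<in> matball m n A0 r" and r0: "0 < r"
    and xb: "\<forall>j<m. labs (x j) < Hv"
    and db: "\<forall>l<n. labs (dotp (m + n) x (col (tildeA m n As) l)) < Ev"
    and rH: "r * Hv \<le> G" and EG: "Ev \<le> G"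
    and Adef: "A = (\<lambda>a b. if a < m \<and> b < n then A0 a b else 0)"
    and l: "l < n"
  shows "labs (app (m + n) (Mx m n A) x (m + l)) < G"
proof -
  have G0: "G > 0" using db l EG labs_nonneg[of "dotp (m + n) x (col (tildeA m n As) l)"] by force
  have "app (m + n) (Mx m n A) x (m + l) = (\<Sum>k<m. A k l * x k) + x (m + l)"
    using l by (simp add: appM)
  also have "\<dots> = dotp (m + n) x (col (tildeA m n As) l) + (\<Sum>k<m. (A k l - As k l) * x k)"
    using l by (simp add: dotp_tildeA algebra_simps sum_subtractf mult.commute)
  finally have e: "app (m + n) (Mx m n A) x (m + l) = dotp (m + n) x (col (tildeA m n As) l) + (\<Sum>k<m. (A k l - As k l) * x k)" .
  have t2: "labs (\<Sum>k<m. (A k l - As k l) * x k) < G"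
  proof (rule labs_sum_lt[OF G0])
    fix k assume "k \<in> {..<m}"
    hence k: "k < m" by simp
    have "labs (A k l - As k l) = labs (As k l - A0 k l)"
      using k l by (simp add: Adef labs_diff_comm)
    also have "\<dots> \<le> matnorm m n (\<lambda>i j. As i j - A0 i j)"
      using matnorm_entry[OF k l, of "\<lambda>i j. As i j - A0 i j"] by simp
    also have "\<dots> \<le> r" using As by (simp add: matball_def)
    finally have dA: "labs (A k l - As k l) \<le> r" .
    have "labs ((A k l - As k l) * x k) = labs (A k l - As k l) * labs (x k)" by (rule labs_mult)
    also have "\<dots> \<le> r * labs (x k)" using dA labs_nonneg[of "x k"] by (intro mult_right_mono) auto
    also have "\<dots> < r * Hv" using xb k r0 by (intro mult_strict_left_mono) auto
    also have "\<dots> \<le> G" by (rule rH)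
    finally show "labs ((A k l - As k l) * x k) < G" .
  qed
  have "labs (app (m + n) (Mx m n A) x (m + l)) \<le> max (labs (dotp (m + n) x (col (tildeA m n As) l))) (labs (\<Sum>k<m. (A k l - As k l) * x k))"
    unfolding e by (rule labs_add)
  also have "\<dots> < G" using t2 db l EG by auto
  finally show ?thesis .
qed

lemma int_approx:
  fixes a lk :: real
  assumes "lk > 0"
  obtains e :: int where "real_of_int e * lk < a" "a \<le> real_of_int (e + 1) * lk"
proof -
  define z where "z = a / lk"
  have c: "real_of_int \<lceil>z\<rceil> - 1 < z" "z \<le> real_of_int \<lceil>z\<rceil>" using ceiling_correct[of z] by auto
  have za: "z * lk = a" using assms by (simp add: z_def)
  have "(real_of_int \<lceil>z\<rceil> - 1) * lk < z * lk" using c(1) assms by (intro mult_strict_right_mono) auto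
  moreover have "z * lk \<le> real_of_int \<lceil>z\<rceil> * lk" using c(2) assms by (intro mult_right_mono) auto
  ultimately show ?thesis using za by (intro that[of "\<lceil>z\<rceil> - 1"]) auto
qed

lemma main:
  fixes m n i t :: nat and R r :: real and A0 :: "nat \<Rightarrow> nat \<Rightarrow> 'a::{field,finite} fls"
    and v :: "nat \<Rightarrow> nat \<Rightarrow> 'a poly"
  assumes m1: "m \<ge> 1" and n1: "n \<ge> 1" and Rk: "kk TYPE('a) + 1 \<le> R"
    and r0: "0 < r" and rlt: "r < R powr (- real ((m + n) * (1 + i)))"
    and nodual: "\<not> (\<exists>q\<in>{q :: nat \<Rightarrow> 'a poly. \<forall>j \<ge> m + n. q j = 0}. \<exists>A\<in>matball m n A0 r.
              0 < Max ((\<lambda>l. labs (poly_to_L (q l))) ` {..<n}) \<and>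
              Max ((\<lambda>l. labs (poly_to_L (q l))) ` {..<n}) < R powr (- real (n * (m + n)^2)) * R powr (real (m * (1 + i))) \<and>
              Max ((\<lambda>l. labs (dotp (m + n) (\<lambda>j. poly_to_L (q j)) (col (tildeA_star m n A) l))) ` {..<m})
                < R powr (- real (n * (m + n)^2)) * R powr (- real (n * (1 + i)) - real m))"
    and prim: "\<forall>s<t. v s \<in> {q :: nat \<Rightarrow> 'a poly. \<forall>j \<ge> m + n. q j = 0} \<and> (\<exists>A\<in>matball m n A0 r.
               0 < Max ((\<lambda>l. labs (poly_to_L (v s l))) ` {..<m}) \<and>
               Max ((\<lambda>l. labs (poly_to_L (v s l))) ` {..<m}) < R powr (- real (m * (m + n)^2)) * R powr (real n * (real m / real (m + n) + real i + 1)) \<and>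
               Max ((\<lambda>l. labs (dotp (m + n) (\<lambda>j. poly_to_L (v s j)) (col (tildeA m n A) l))) ` {..<n})
                 < R powr (- real (m * (m + n)^2)) * R powr (- real m * (real m / real (m + n) + real i + 1) - real n))"
    and li: "lin_indep (m + n) t (\<lambda>s j. poly_to_L (v s j))"
  shows "t \<le> n"
proof (rule ccontr)
  assume "\<not> t \<le> n"
  hence tn: "n + 1 \<le> t" by simp
  define k where "k = kk TYPE('a)"
  have k1: "k > 1" unfolding k_def by (rule kk_gt1)
  have R1: "R > k" "R > 1" "R > 0" using Rk k1 by (auto simp: k_def)
  define lk where "lk = ln k"
  define lR where "lR = ln R"
  have lk0: "lk > 0" using k1 by (simp add: lk_def)
  have lklR: "lk < lR" using R1 k1 by (simp add: lk_def lR_def)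
  have lR0: "lR > 0" using lk0 lklR by simp
  define x where "x = real m"
  define y where "y = real n"
  define I where "I = real i"
  have x1: "x \<ge> 1" and y1: "y \<ge> 1" and I0: "I \<ge> 0" using m1 n1 by (auto simp: x_def y_def I_def)
  define \<tau> where "\<tau> = x / (x + y)"
  define D where "D = x * (x + y)^2"
  define Ds where "Ds = y * (x + y)^2"
  define h where "h = - D + y * (\<tau> + I + 1)"
  define g where "g = - D + y * \<tau> - x * (1 + I)"
  define Tu where "Tu = - Ds + x * (1 + I)"
  define Tw where "Tw = - Ds - y * (1 + I) - x"
  have ex1: "x * h + y * g \<le> 0"
    unfolding h_def g_def D_def \<tau>_def by (rule exps(1)[OF x1 y1 I0])
  have ex2: "x * h + y * g + (x - 1) * (1 - g) \<le> (x - 1) * Tu"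
    unfolding h_def g_def D_def \<tau>_def Tu_def Ds_def by (rule exps(2)[OF x1 y1 I0])
  have ex3: "h + y * g \<le> (x - 1) * Tw"
    unfolding h_def g_def D_def \<tau>_def Tw_def Ds_def by (rule exps(3)[OF x1 y1 I0])
  have ex4: "Tw < 0"
    unfolding Tw_def Ds_def by (rule exps(4)[OF x1 y1 I0])
  have ex5: "h - (x + y) * (1 + I) = g"
    unfolding h_def g_def D_def \<tau>_def by (rule exps(5)[OF x1 y1 I0])
  have ex6: "- D - x * (\<tau> + I + 1) - y \<le> g"
    unfolding g_def D_def \<tau>_def by (rule exps(6)[OF x1 y1 I0])
  have Hb: "R powr (- real (m * (m + n)^2)) * R powr (real n * (real m / real (m + n) + real i + 1)) = R powr h"
    by (simp add: powr_add[symmetric] h_def D_def x_def y_def I_def \<tau>_def)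
  have Eb: "R powr (- real (m * (m + n)^2)) * R powr (- real m * (real m / real (m + n) + real i + 1) - real n)
      = R powr (- D - x * (\<tau> + I + 1) - y)"
  proof -
    have e0: "real (m * (m + n)^2) = D" by (simp add: D_def x_def y_def)
    have e1: "real (m + n) = x + y" by (simp add: x_def y_def)
    have "- real (m * (m + n)^2) + (- real m * (real m / real (m + n) + real i + 1) - real n) = - D - x * (\<tau> + I + 1) - y"
      unfolding e0 e1 x_def[symmetric] y_def[symmetric] I_def[symmetric] \<tau>_def[symmetric] by linarith
    thus ?thesis by (simp only: powr_add[symmetric])
  qed
  have Tub: "R powr (- real (n * (m + n)^2)) * R powr (real (m * (1 + i))) = R powr Tu"
    by (simp add: powr_add[symmetric] Tu_def Ds_def x_def y_def I_def algebra_simps)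
  have Twb: "R powr (- real (n * (m + n)^2)) * R powr (- real (n * (1 + i)) - real m) = R powr Tw"
  proof -
    have e0: "real (n * (m + n)^2) = Ds" by (simp add: Ds_def x_def y_def)
    have e1: "real (n * (1 + i)) = y * (1 + I)" by (simp add: y_def I_def algebra_simps)
    have "- real (n * (m + n)^2) + (- real (n * (1 + i)) - real m) = Tw"
      unfolding e0 e1 x_def[symmetric] Tw_def by linarith
    thus ?thesis by (simp only: powr_add[symmetric])
  qed
  have rb: "r < R powr (- (x + y) * (1 + I))"
  proof -
    have "- real ((m + n) * (1 + i)) = - (x + y) * (1 + I)" by (simp add: x_def y_def I_def algebra_simps)
    thus ?thesis using rlt by simp
  qed
  obtain e1 :: int where e1a: "real_of_int e1 * lk < h * lR" and e1b: "h * lR \<le> real_of_int (e1 + 1) * lk"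
    using int_approx[OF lk0] by blast
  obtain e2 :: int where e2a: "real_of_int e2 * lk < g * lR" and e2b: "g * lR \<le> real_of_int (e2 + 1) * lk"
    using int_approx[OF lk0] by blast
  define A where "A = (\<lambda>a b. if a < m \<and> b < n then A0 a b else (0::'a fls))"
  have AB: "A \<in> matball m n A0 r"
  proof -
    have "matnorm m n (\<lambda>i j. A i j - A0 i j) = 0" using m1 n1 by (intro matnorm_zero) (auto simp: A_def)
    thus ?thesis using r0 by (auto simp: matball_def A_def)
  qed
  define ew where "ew = (\<lambda>i. if i < m then e1 else e2)"
  define M where "M = Mx m n A"
  define w where "w s j = poly_to_L (v s j)" for s j
  have lkk: "ln (kk TYPE('a)) = lk" by (simp add: lk_def k_def)
  have primnd: "ndle (m + n) ew (app (m + n) M (w s)) 0" if s: "s < t" for s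
  proof -
    obtain As where As: "As \<in> matball m n A0 r"
      and b1: "Max ((\<lambda>l. labs (poly_to_L (v s l))) ` {..<m}) < R powr h"
      and b2: "Max ((\<lambda>l. labs (dotp (m + n) (\<lambda>j. poly_to_L (v s j)) (col (tildeA m n As) l))) ` {..<n})
                 < R powr (- D - x * (\<tau> + I + 1) - y)"
      using prim s unfolding Hb Eb by blast
    have xb: "\<forall>j<m. labs (w s j) < R powr h" using b1 m1 by (simp add: Max_lt_iff_fin w_def)
    have db: "\<forall>l<n. labs (dotp (m + n) (w s) (col (tildeA m n As) l)) < R powr (- D - x * (\<tau> + I + 1) - y)"
    proof -
      have "(\<lambda>j. poly_to_L (v s j)) = w s" by (simp add: w_def fun_eq_iff)
      thus ?thesis using b2 n1 by (simp add: Max_lt_iff_fin)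
    qed
    have rH: "r * R powr h \<le> R powr g"
    proof -
      have "r * R powr h \<le> R powr (- (x + y) * (1 + I)) * R powr h" using rb by (intro mult_right_mono) auto
      also have "\<dots> = R powr g" using ex5 by (simp add: powr_add[symmetric] algebra_simps)
      finally show ?thesis .
    qed
    have EG: "R powr (- D - x * (\<tau> + I + 1) - y) \<le> R powr g" using ex6 R1 by (intro powr_mono) auto
    show ?thesis unfolding ndle_def
    proof (intro allI impI)
      fix j assume j: "j < m + n"
      show "dle (app (m + n) M (w s) j) (0 + ew j)"
      proof (cases "j < m")
        case True
        have "labs (w s j) < R powr h" using xb True by simp
        hence "dle (w s j) e1"
          by (rule labs_lt_powr_dle) (use R1 e1b lkk lR_def in auto)
        thus ?thesis using True j by (simp add: M_def appM ew_def)
      next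
        case False
        define l where "l = j - m"
        have l: "l < n" "j = m + l" using False j by (auto simp: l_def)
        have "labs (app (m + n) (Mx m n A) (w s) (m + l)) < R powr g"
          by (rule primal_est[OF As r0 xb db rH EG A_def l(1)])
        hence "dle (app (m + n) M (w s) j) e2"
          unfolding M_def l(2) by (rule labs_lt_powr_dle) (use R1 e2b lkk lR_def in auto)
        thus ?thesis using False by (simp add: ew_def)
      qed
    qed
  qed
  have lbM: "\<forall>v D. (\<forall>r<m + n. polyish (v r)) \<longrightarrow> nz (m + n) v \<longrightarrow> ndle (m + n) ew (app (m + n) M v) D \<longrightarrow> - max e1 e2 \<le> D"
    unfolding M_def ew_def by (rule lbMx)
  obtain q where inv: "latinv (m + n) q" and red: "reduced (m + n) ew (\<lambda>j. app (m + n) M (q j))"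
    using reduce[OF latinv_init injMx[of m n A, folded M_def] lbM] by blast
  define \<mu> where "\<mu> j = ndeg (m + n) ew (app (m + n) M (q j))" for j
  define S where "S = {j. j < m + n \<and> \<mu> j \<le> 0}"
  have li': "lin_indep (m + n) (n + 1) w"
    unfolding lin_indep_def
  proof (intro allI impI)
    fix c :: "nat \<Rightarrow> 'a fls" and s
    assume h0: "\<forall>j<m + n. (\<Sum>s<n + 1. c s * w s j) = 0" and s: "s < n + 1"
    define c' where "c' s = (if s < n + 1 then c s else 0)" for s
    have "\<forall>j<m + n. (\<Sum>s<t. c' s * poly_to_L (v s j)) = 0"
    proof (intro allI impI)
      fix j assume j: "j < m + n"
      have "(\<Sum>s<t. c' s * poly_to_L (v s j)) = (\<Sum>s<n + 1. c s * w s j)"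
        by (rule sum.mono_neutral_cong_right) (use tn in \<open>auto simp: c'_def w_def\<close>)
      thus "(\<Sum>s<t. c' s * poly_to_L (v s j)) = 0" using h0 j by simp
    qed
    hence "\<forall>s<t. c' s = 0" using li[unfolded lin_indep_def, rule_format, of c'] by blast
    hence "c' s = 0" using s tn by simp
    thus "c s = 0" using s by (simp add: c'_def)
  qed
  have cardS: "n + 1 \<le> card S"
    unfolding S_def \<mu>_def
  proof (rule count_small[OF inv red _ _ li'])
    show "\<forall>s<n + 1. \<forall>r<m + n. polyish (w s r)" by (simp add: w_def polyish_poly_to_L)
    show "\<forall>s<n + 1. ndle (m + n) ew (app (m + n) M (w s)) 0" using primnd tn by simp
  qed
  have vol: "0 \<le> (\<Sum>j<m + n. \<mu> j) + (\<Sum>i<m + n. ew i)"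
    unfolding \<mu>_def M_def by (rule volume[OF inv detMx])
  have sew: "(\<Sum>i<m + n. ew i) = int m * e1 + int n * e2"
  proof -
    have U: "{..<m + n} = {..<m} \<union> {m..<m + n}" by auto
    have "(\<Sum>i<m + n. ew i) = (\<Sum>i<m. ew i) + (\<Sum>i\<in>{m..<m + n}. ew i)"
      unfolding U by (rule sum.union_disjoint) auto
    also have "(\<Sum>i<m. ew i) = (\<Sum>i<m. e1)" by (rule sum.cong) (auto simp: ew_def)
    also have "(\<Sum>i\<in>{m..<m + n}. ew i) = (\<Sum>i\<in>{m..<m + n}. e2)" by (rule sum.cong) (auto simp: ew_def)
    finally show ?thesis by simp
  qed
  obtain jm where jm: "jm < m + n" "\<forall>j<m + n. \<mu> j \<le> \<mu> jm"
  proof -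
    have ne: "\<mu> ` {..<m + n} \<noteq> {}" using m1 by auto
    have "Max (\<mu> ` {..<m + n}) \<in> \<mu> ` {..<m + n}" by (rule Max_in) (use ne in auto)
    then obtain jm where "jm < m + n" "\<mu> jm = Max (\<mu> ` {..<m + n})" by auto
    moreover have "\<forall>j<m + n. \<mu> j \<le> Max (\<mu> ` {..<m + n})" by auto
    ultimately show ?thesis using that by auto
  qed
  define mm where "mm = \<mu> jm"
  have neg: "x * (real_of_int e1 * lk) + y * (real_of_int e2 * lk) < 0"
    by (rule ineq_neg[OF _ _ lR0 e1a e2a ex1]) (use x1 y1 in auto)
  hence negi: "int m * e1 + int n * e2 < 0"
  proof -
    have "real_of_int (int m * e1 + int n * e2) * lk < 0" using neg by (simp add: x_def y_def algebra_simps)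
    hence "real_of_int (int m * e1 + int n * e2) < 0" using lk0 by (simp only: mult_less_0_iff) auto
    thus ?thesis by (simp only: of_int_less_0_iff)
  qed
  have Sd: "S \<subseteq> {..<m + n}" by (auto simp: S_def)
  have sumle: "(\<Sum>j<m + n. \<mu> j) \<le> int (card ({..<m + n} - S)) * mm"
  proof -
    have "(\<Sum>j<m + n. \<mu> j) \<le> (\<Sum>j<m + n. if j \<in> S then 0 else mm)"
      by (rule sum_mono) (use jm in \<open>auto simp: S_def mm_def\<close>)
    also have "\<dots> = (\<Sum>j\<in>{..<m + n} - S. mm)"
      by (simp add: sum.If_cases Diff_eq)
    finally show ?thesis by simp
  qed
  have cardD: "card ({..<m + n} - S) + n + 1 \<le> m + n"
    using card_Diff_subset[OF _ Sd] cardS card_mono[OF _ Sd] by (simp add: finite_subset[OF Sd])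
  have mmpos: "mm > 0"
  proof (rule ccontr)
    assume "\<not> mm > 0"
    hence "(\<Sum>j<m + n. \<mu> j) \<le> 0" using jm by (intro sum_nonpos) (auto simp: mm_def)
    thus False using vol sew negi by linarith
  qed
  have mmb: "int (m - 1) * mm \<ge> - (int m * e1 + int n * e2)"
  proof -
    have "int (card ({..<m + n} - S)) * mm \<le> int (m - 1) * mm"
      using cardD mmpos by (intro mult_right_mono) auto
    thus ?thesis using sumle vol sew by linarith
  qed
  have m2: "m \<ge> 2"
  proof (rule ccontr)
    assume "\<not> m \<ge> 2" hence "m = 1" using m1 by simp
    thus False using mmb negi by simp
  qed
  have x2: "x \<ge> 2" using m2 by (simp add: x_def)
  have Ub: "(x - 1) * (real_of_int mm * lk) \<ge> - (x * (real_of_int e1 * lk) + y * (real_of_int e2 * lk))"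
  proof -
    have c: "real_of_int (- (int m * e1 + int n * e2)) \<le> real_of_int (int (m - 1) * mm)"
      using mmb by (simp only: of_int_le_iff)
    have "real_of_int (int (m - 1) * mm) * lk \<ge> real_of_int (- (int m * e1 + int n * e2)) * lk"
      using mult_right_mono[OF c] lk0 by simp
    thus ?thesis using m2 by (simp add: x_def y_def algebra_simps of_nat_diff)
  qed
  have iu: "- (real_of_int e2 * lk) - real_of_int mm * lk < Tu * lR"
    by (rule ineq_u[OF x2 y1 lR0 lk0 lklR e1a _ e2a Ub ex2]) (use e2b in \<open>simp add: algebra_simps\<close>)
  have iw: "- (real_of_int e1 * lk) - real_of_int mm * lk < Tw * lR"
    by (rule ineq_w[OF x2 _ lR0 e1a e2a Ub ex3]) (use y1 in simp)
  have iw0: "- e1 - mm < 0"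
  proof -
    have "real_of_int (- e1 - mm) * lk < 0" using iw ex4 lR0 by (simp add: algebra_simps mult_neg_pos) (smt (verit) mult_neg_pos)
    thus ?thesis using lk0 by (simp add: mult_less_0_iff)
  qed
  obtain cf where cfp: "\<forall>i<m + n. \<forall>j<m + n. polyish (cf i j)"
    and rep: "\<forall>z r. r < m + n \<longrightarrow> z r = (\<Sum>j<m + n. (\<Sum>i<m + n. z i * cf i j) * q j r)"
    and orthc: "\<forall>j<m + n. \<forall>jm<m + n. (\<Sum>r<m + n. cf r jm * q j r) = (if j = jm then 1 else 0)"
    by (rule span_rep[OF inv])
  define \<pi> where "\<pi> r = cf r jm" for r
  have \<pi>p: "\<forall>r<m + n. polyish (\<pi> r)" using cfp jm by (simp add: \<pi>_def)
  have keyd: "dle (\<Sum>r<m + n. z r * \<pi> r) (- ew i0 - mm)"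
    if i0: "i0 < m + n" and zu: "\<forall>i'<m + n. app (m + n) M z i' = (if i' = i0 then 1 else 0)" for z i0
  proof -
    define cz where "cz j = (\<Sum>i<m + n. z i * cf i j)" for j
    have ap: "app (m + n) M z i' = (\<Sum>j<m + n. cz j * app (m + n) M (q j) i')" for i'
    proof -
      have "app (m + n) M z i' = app (m + n) M (\<lambda>r. \<Sum>j<m + n. cz j * q j r) i'"
        unfolding app_def by (rule sum.cong) (use rep in \<open>auto simp: cz_def\<close>)
      thus ?thesis by (simp only: app_lin)
    qed
    have nd: "ndle (m + n) ew (\<lambda>i'. \<Sum>j<m + n. cz j * app (m + n) M (q j) i') (- ew i0)"
      unfolding ndle_def
    proof (intro allI impI)
      fix i' assume i': "i' < m + n"
      have "(\<Sum>j<m + n. cz j * app (m + n) M (q j) i') = (if i' = i0 then 1 else 0)"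
        using zu i' by (simp add: ap)
      thus "dle (\<Sum>j<m + n. cz j * app (m + n) M (q j) i') (- ew i0 + ew i')"
        by (simp add: dle_def)
    qed
    have "dle (cz jm) (- ew i0 - ndeg (m + n) ew (app (m + n) M (q jm)))"
      by (rule orth[OF red nd jm(1)])
    thus ?thesis by (simp add: cz_def \<pi>_def mm_def \<mu>_def)
  qed
  have du: "dle (\<pi> (m + l)) (- e2 - mm)" if l: "l < n" for l
  proof -
    define z where "z r = (if r = m + l then 1 else (0::'a fls))" for r
    have "\<forall>i'<m + n. app (m + n) M z i' = (if i' = m + l then 1 else 0)"
    proof (intro allI impI)
      fix i' assume i': "i' < m + n"
      show "app (m + n) M z i' = (if i' = m + l then 1 else 0)"
        using i' by (auto simp: M_def appM z_def)
    qed
    hence "dle (\<Sum>r<m + n. z r * \<pi> r) (- ew (m + l) - mm)" using l by (intro keyd) auto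
    moreover have "(\<Sum>r<m + n. z r * \<pi> r) = \<pi> (m + l)"
    proof -
      have "(\<Sum>r<m + n. z r * \<pi> r) = (\<Sum>r<m + n. if r = m + l then \<pi> (m + l) else 0)"
        by (rule sum.cong) (auto simp: z_def)
      also have "\<dots> = \<pi> (m + l)" using l by simp
      finally show ?thesis .
    qed
    ultimately show ?thesis by (simp add: ew_def)
  qed
  have dw: "dle (\<pi> a - (\<Sum>l<n. A a l * \<pi> (m + l))) (- e1 - mm)" if a: "a < m" for a
  proof -
    define z where "z r = (if r = a then 1 else if m \<le> r \<and> r < m + n then - A a (r - m) else (0::'a fls))" for r
    have "\<forall>i'<m + n. app (m + n) M z i' = (if i' = a then 1 else 0)"
    proof (intro allI impI)
      fix i' assume i': "i' < m + n"
      show "app (m + n) M z i' = (if i' = a then 1 else 0)"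
      proof (cases "i' < m")
        case True thus ?thesis by (simp add: M_def appM z_def i')
      next
        case False
        have "(\<Sum>k<m. A k (i' - m) * z k) = (\<Sum>k<m. if k = a then A a (i' - m) else 0)"
          by (rule sum.cong) (auto simp: z_def)
        also have "\<dots> = A a (i' - m)" using a by simp
        finally show ?thesis using False i' a by (simp add: M_def appM z_def)
      qed
    qed
    hence "dle (\<Sum>r<m + n. z r * \<pi> r) (- ew a - mm)" using a by (intro keyd) auto
    moreover have "(\<Sum>r<m + n. z r * \<pi> r) = \<pi> a - (\<Sum>l<n. A a l * \<pi> (m + l))"
    proof -
      have U: "{..<m + n} = {..<m} \<union> {m..<m + n}" by auto
      have "(\<Sum>r<m + n. z r * \<pi> r) = (\<Sum>r<m. z r * \<pi> r) + (\<Sum>r\<in>{m..<m + n}. z r * \<pi> r)"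
        unfolding U by (rule sum.union_disjoint) auto
      also have "(\<Sum>r<m. z r * \<pi> r) = (\<Sum>r<m. if r = a then \<pi> a else 0)"
        by (rule sum.cong) (auto simp: z_def)
      also have "\<dots> = \<pi> a" using a by simp
      also have "(\<Sum>r\<in>{m..<m + n}. z r * \<pi> r) = (\<Sum>r\<in>{m..<m + n}. - (A a (r - m) * \<pi> r))"
        by (rule sum.cong) (use a in \<open>auto simp: z_def\<close>)
      also have "\<dots> = (\<Sum>l\<in>{0..<n}. - (A a (l + m - m) * \<pi> (l + m)))"
        using sum.shift_bounds_nat_ivl[of "\<lambda>r. - (A a (r - m) * \<pi> r)" 0 m n] by (simp add: add.commute)
      also have "\<dots> = - (\<Sum>l<n. A a l * \<pi> (m + l))"
        by (simp add: sum_negf atLeast0LessThan add.commute)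
      finally show ?thesis by simp
    qed
    ultimately show ?thesis using a by (simp add: ew_def)
  qed
  have "\<forall>r\<in>{..<m + n}. \<exists>p. poly_to_L p = \<pi> r" using \<pi>p polyish_to_poly by blast
  from bchoice[OF this] obtain pp where pp: "\<forall>r\<in>{..<m + n}. poly_to_L (pp r) = \<pi> r" by (elim exE)
  define qd where "qd j = (if j < n then pp (m + j) else if j < m + n then - pp (j - n) else 0)" for j
  have qdL1: "poly_to_L (qd l) = \<pi> (m + l)" if "l < n" for l using that pp by (simp add: qd_def)
  have qdL2: "poly_to_L (qd (n + a)) = - \<pi> a" if "a < m" for a
    using that pp by (simp add: qd_def poly_to_L_uminus)
  have qdP: "qd \<in> {q :: nat \<Rightarrow> 'a poly. \<forall>j \<ge> m + n. q j = 0}" by (simp add: qd_def)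
  have lkk': "ln (kk TYPE('a)) = lk" "ln R = lR" by (simp_all add: lk_def k_def lR_def)
  have ub: "\<forall>l<n. labs (poly_to_L (qd l)) < R powr Tu"
  proof (intro allI impI)
    fix l assume l: "l < n"
    have "labs (\<pi> (m + l)) < R powr Tu"
      by (rule dle_powr_labs_lt[OF du[OF l]]) (use R1 iu lkk' in \<open>auto simp: algebra_simps\<close>)
    thus "labs (poly_to_L (qd l)) < R powr Tu" using qdL1[OF l] by simp
  qed
  have wb: "\<forall>a<m. labs (dotp (m + n) (\<lambda>j. poly_to_L (qd j)) (col (tildeA_star m n A) a)) < R powr Tw"
  proof (intro allI impI)
    fix a assume a: "a < m"
    have "dotp (m + n) (\<lambda>j. poly_to_L (qd j)) (col (tildeA_star m n A) a) = (\<Sum>j<n. \<pi> (m + j) * A a j) - \<pi> a"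
      using a by (simp add: dotp_tildeA_star qdL1 qdL2)
    also have "\<dots> = - (\<pi> a - (\<Sum>l<n. A a l * \<pi> (m + l)))" by (simp add: mult.commute)
    finally have e: "dotp (m + n) (\<lambda>j. poly_to_L (qd j)) (col (tildeA_star m n A) a) = - (\<pi> a - (\<Sum>l<n. A a l * \<pi> (m + l)))" .
    have "labs (\<pi> a - (\<Sum>l<n. A a l * \<pi> (m + l))) < R powr Tw"
      by (rule dle_powr_labs_lt[OF dw[OF a]]) (use R1 iw lkk' in \<open>auto simp: algebra_simps\<close>)
    thus "labs (dotp (m + n) (\<lambda>j. poly_to_L (qd j)) (col (tildeA_star m n A) a)) < R powr Tw"
      unfolding e labs_uminus .
  qed
  have nzu: "\<exists>l<n. \<pi> (m + l) \<noteq> 0"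
  proof (rule ccontr)
    assume "\<not> (\<exists>l<n. \<pi> (m + l) \<noteq> 0)"
    hence z1: "\<forall>l<n. \<pi> (m + l) = 0" by simp
    have z2: "\<pi> a = 0" if a: "a < m" for a
    proof -
      have dd: "dle (\<pi> a) (- e1 - mm)" using dw[OF a] z1 by simp
      have "polyish (\<pi> a)" using \<pi>p a by simp
      thus ?thesis using polyish_dle_neg[OF _ dd] iw0 by simp
    qed
    have "\<forall>r<m + n. \<pi> r = 0"
    proof (intro allI impI)
      fix r assume r: "r < m + n"
      show "\<pi> r = 0"
      proof (cases "r < m")
        case True thus ?thesis by (rule z2)
      next
        case False
        hence "r = m + (r - m)" "r - m < n" using r by auto
        thus ?thesis using z1 by metis
      qed
    qed
    hence "(\<Sum>r<m + n. cf r jm * q jm r) = 0" by (simp add: \<pi>_def)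
    moreover have "(\<Sum>r<m + n. cf r jm * q jm r) = 1" using orthc jm(1) by simp
    ultimately show False by simp
  qed
  then obtain l0 where l0: "l0 < n" "\<pi> (m + l0) \<noteq> 0" by blast
  have c1: "0 < Max ((\<lambda>l. labs (poly_to_L (qd l))) ` {..<n})"
    by (rule Max_pos_fin[OF l0(1)]) (use l0 qdL1 labs_pos in simp)
  have c2: "Max ((\<lambda>l. labs (poly_to_L (qd l))) ` {..<n}) < R powr (- real (n * (m + n)^2)) * R powr (real (m * (1 + i)))"
    unfolding Tub using ub n1 by (simp add: Max_lt_iff_fin)
  have c3: "Max ((\<lambda>l. labs (dotp (m + n) (\<lambda>j. poly_to_L (qd j)) (col (tildeA_star m n A) l))) ` {..<m})
                < R powr (- real (n * (m + n)^2)) * R powr (- real (n * (1 + i)) - real m)"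
    unfolding Twb using wb m1 by (simp add: Max_lt_iff_fin)
  show False using nodual qdP AB c1 c2 c3 by blast
qed

theorem lemma3p2:
  fixes \<sigma> :: real and m n :: nat
  assumes "\<sigma> > 0" and "m \<ge> 1" and "n \<ge> 1"
  shows "\<exists>R0 \<ge> 1. \<forall>R \<ge> R0. \<forall>i::nat. \<forall>(A0 :: nat \<Rightarrow> nat \<Rightarrow> 'a::{field,finite} fls) r.
    (let \<delta> = R powr (- real (m * (m + n)^2));
         \<delta>s = R powr (- real (n * (m + n)^2));
         \<tau> = real m / real (m + n);
         B = matball m n A0 r;
         PolVec = {q :: nat \<Rightarrow> 'a poly. \<forall>j \<ge> m + n. q j = 0}
     in 0 < r \<and> r < R powr (- real ((m + n) * (1 + i))) \<and>
        (\<forall>A\<in>B. matnorm m n A \<le> \<sigma>) \<and>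
        \<not> (\<exists>q\<in>PolVec. \<exists>A\<in>B.
              0 < Max ((\<lambda>l. labs (poly_to_L (q l))) ` {..<n}) \<and>
              Max ((\<lambda>l. labs (poly_to_L (q l))) ` {..<n}) < \<delta>s * R powr (real (m * (1 + i))) \<and>
              Max ((\<lambda>l. labs (dotp (m + n) (\<lambda>j. poly_to_L (q j)) (col (tildeA_star m n A) l))) ` {..<m})
                < \<delta>s * R powr (- real (n * (1 + i)) - real m))
     \<longrightarrow> (\<forall>t (v :: nat \<Rightarrow> nat \<Rightarrow> 'a poly).
            (\<forall>s<t. v s \<in> PolVec \<and> (\<exists>A\<in>B.
               0 < Max ((\<lambda>l. labs (poly_to_L (v s l))) ` {..<m}) \<and>
               Max ((\<lambda>l. labs (poly_to_L (v s l))) ` {..<m}) < \<delta> * R powr (real n * (\<tau> + real i + 1)) \<and>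
               Max ((\<lambda>l. labs (dotp (m + n) (\<lambda>j. poly_to_L (v s j)) (col (tildeA m n A) l))) ` {..<n})
                 < \<delta> * R powr (- real m * (\<tau> + real i + 1) - real n)))
            \<and> lin_indep (m + n) t (\<lambda>s j. poly_to_L (v s j))
            \<longrightarrow> t \<le> n))"
proof -
  show ?thesis
    apply (rule exI[where x="kk TYPE('a) + 1"])
    apply (intro conjI allI impI)
     apply (use kk_gt1[where 'a='a] in simp)
    apply (unfold Let_def)
    apply (intro allI impI)
    apply (elim conjE)
    apply (rule main[OF assms(2,3)])
          apply assumption+
    done
qed

end
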